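(* Let $k$ be an infinite field of characteristic $0$. (i) If $W=W(X,Y)\in\Xi'$, $H=(L,V)\in\Xi$, and $(T_1,T_2)$ is an $H$-closed congruence of $W$, then $T_1\oplus T_2\subseteq\mathcal{F}(W)$ is an $\mathcal{F}(H)$-closed congruence. (ii) If $F(M)\in\mathrm{Ob}\,\Theta^0$, $(N,p)\in\Theta$, and $T\subseteq F(M)$ is an $N$-closed congruence, then $(T\cap\ker p,\,T\cap\mathrm{im}\,p)\subseteq\mathcal{F}^{-1}(F(M))$ is an $\mathcal{F}^{-1}(N)$-closed congruence (here $p$ in $\ker p$, $\mathrm{im}\,p$ is the projection of $F(M)$). (iii) The maps $\mathcal{F}_{W,H}:Cl_H(W)\to Cl_{\mathcal{F}(H)}(\mathcal{F}(W))$, $(T_1,T_2)\mapsto T_1\oplus T_2$, and $\mathcal{F}^{-1}_{F(M),N}:Cl_N(F(M))\to Cl_{\mathcal{F}^{-1}(N)}(\mathcal{F}^{-1}(F(M)))$, $T\mapsto(T\cap\ker p,T\cap\mathrm{im}\,p)$, are bijections.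
   Context: Representations $(L,V)$ (Lie algebra $L$ over $k$, $L$-module $V$) with homomorphisms $(\varphi,\psi)$ ($\varphi$ Lie homomorphism, $\psi$ linear, $\varphi(l)\circ\psi(v)=\psi(l\circ v)$) form $\Xi$. $W(X,Y)=(L(X),A(X)Y)$ is the free representation ($L(X)$ free Lie algebra, $A(X)$ free unital associative algebra, $A(X)Y$ free $A(X)$-module with basis $Y$); $\Xi'$ is the set of $W(X,Y)$ with $X,Y$ finite subsets of fixed countable sets and $|X|=|Y|$. A Lie algebra with projection-derivation is a Lie algebra $M$ with linear $p$, $p^2=p$, $p[m_1,m_2]=[pm_1,m_2]+[m_1,pm_2]$; these form the variety $\Theta$ (homomorphisms commute with $p$), and $\Theta^0$ consists of the free algebras $F(M)$ of $\Theta$ on finite subsets $M$ of a fixed countable set. $\mathcal{F}(L,V)=(L\oplus V,p_V)$ with $[l_1+v_1,l_2+v_2]=[l_1,l_2]+l_1\circ v_2-l_2\circ v_1$, $p_V(l+v)=v$; $\mathcal{F}^{-1}(M,p)=(\ker p,\mathrm{im}\,p)$ with $l\circ v=[l,v]$. Closedness: for an algebra $H$ and a free object $W$ (of either kind) and a subset $T$ of $W$ (a pair $(T_1,T_2)$ of subsets of the two sorts in the representation case), $T'_H$ is the set of homomorphisms $W\to H$ whose kernel contains $T$ (sortwise), $T''_H$ is the (sortwise) intersection of their kernels, $T$ is $H$-closed if $T''_H=T$, and $Cl_H(W)$ is the set of $H$-closed subsets of $W$. *)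

theory Defs
  imports Main
begin

text \<open>All structures are over a field 'k and are given by a carrier set together with
operations (so that several structures on the same HOL type, e.g. subalgebras, can be
handled).\<close>

record ('k, 'a) vs =
  vcarrier :: "'a set"
  vadd :: "'a \<Rightarrow> 'a \<Rightarrow> 'a"
  vzero :: "'a"
  vsmul :: "'k \<Rightarrow> 'a \<Rightarrow> 'a"

record ('k, 'a) lie = "('k, 'a) vs" +
  lbr :: "'a \<Rightarrow> 'a \<Rightarrow> 'a"

record ('k, 'a) theta = "('k, 'a) lie" +
  tproj :: "'a \<Rightarrow> 'a"

record ('k, 'l, 'v) rep =
  rlie :: "('k, 'l) lie"
  rmod :: "('k, 'v) vs"
  ract :: "'l \<Rightarrow> 'v \<Rightarrow> 'v"

definition vsub :: "('k::field, 'a, 'c) vs_scheme \<Rightarrow> 'a \<Rightarrow> 'a \<Rightarrow> 'a" where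
  "vsub V x y = vadd V x (vsmul V (- 1) y)"

definition vs_ax :: "('k::field, 'a, 'c) vs_scheme \<Rightarrow> bool" where
  "vs_ax V \<longleftrightarrow>
     vzero V \<in> vcarrier V \<and>
     (\<forall>x\<in>vcarrier V. \<forall>y\<in>vcarrier V. vadd V x y \<in> vcarrier V) \<and>
     (\<forall>a. \<forall>x\<in>vcarrier V. vsmul V a x \<in> vcarrier V) \<and>
     (\<forall>x\<in>vcarrier V. \<forall>y\<in>vcarrier V. \<forall>z\<in>vcarrier V.
        vadd V (vadd V x y) z = vadd V x (vadd V y z)) \<and>
     (\<forall>x\<in>vcarrier V. \<forall>y\<in>vcarrier V. vadd V x y = vadd V y x) \<and>
     (\<forall>x\<in>vcarrier V. vadd V (vzero V) x = x) \<and>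
     (\<forall>x\<in>vcarrier V. \<exists>y\<in>vcarrier V. vadd V x y = vzero V) \<and>
     (\<forall>a. \<forall>x\<in>vcarrier V. \<forall>y\<in>vcarrier V.
        vsmul V a (vadd V x y) = vadd V (vsmul V a x) (vsmul V a y)) \<and>
     (\<forall>a b. \<forall>x\<in>vcarrier V. vsmul V (a + b) x = vadd V (vsmul V a x) (vsmul V b x)) \<and>
     (\<forall>a b. \<forall>x\<in>vcarrier V. vsmul V (a * b) x = vsmul V a (vsmul V b x)) \<and>
     (\<forall>x\<in>vcarrier V. vsmul V 1 x = x)"

definition lie_ax :: "('k::field, 'a, 'c) lie_scheme \<Rightarrow> bool" where
  "lie_ax L \<longleftrightarrow> vs_ax L \<and>
     (\<forall>x\<in>vcarrier L. \<forall>y\<in>vcarrier L. lbr L x y \<in> vcarrier L) \<and>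
     (\<forall>x\<in>vcarrier L. \<forall>y\<in>vcarrier L. \<forall>z\<in>vcarrier L.
        lbr L (vadd L x y) z = vadd L (lbr L x z) (lbr L y z) \<and>
        lbr L z (vadd L x y) = vadd L (lbr L z x) (lbr L z y)) \<and>
     (\<forall>a. \<forall>x\<in>vcarrier L. \<forall>y\<in>vcarrier L.
        lbr L (vsmul L a x) y = vsmul L a (lbr L x y) \<and>
        lbr L x (vsmul L a y) = vsmul L a (lbr L x y)) \<and>
     (\<forall>x\<in>vcarrier L. lbr L x x = vzero L) \<and>
     (\<forall>x\<in>vcarrier L. \<forall>y\<in>vcarrier L. \<forall>z\<in>vcarrier L.
        vadd L (vadd L (lbr L x (lbr L y z)) (lbr L y (lbr L z x))) (lbr L z (lbr L x y))
          = vzero L)"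

definition theta_alg :: "('k::field, 'a) theta \<Rightarrow> bool" where
  "theta_alg N \<longleftrightarrow> lie_ax N \<and>
     (\<forall>x\<in>vcarrier N. tproj N x \<in> vcarrier N) \<and>
     (\<forall>x\<in>vcarrier N. \<forall>y\<in>vcarrier N. tproj N (vadd N x y) = vadd N (tproj N x) (tproj N y)) \<and>
     (\<forall>a. \<forall>x\<in>vcarrier N. tproj N (vsmul N a x) = vsmul N a (tproj N x)) \<and>
     (\<forall>x\<in>vcarrier N. tproj N (tproj N x) = tproj N x) \<and>
     (\<forall>x\<in>vcarrier N. \<forall>y\<in>vcarrier N.
        tproj N (lbr N x y) = vadd N (lbr N (tproj N x) y) (lbr N x (tproj N y)))"

definition rep_alg :: "('k::field, 'l, 'v) rep \<Rightarrow> bool" where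
  "rep_alg R \<longleftrightarrow> lie_ax (rlie R) \<and> vs_ax (rmod R) \<and>
     (\<forall>l\<in>vcarrier (rlie R). \<forall>v\<in>vcarrier (rmod R). ract R l v \<in> vcarrier (rmod R)) \<and>
     (\<forall>l1\<in>vcarrier (rlie R). \<forall>l2\<in>vcarrier (rlie R). \<forall>v\<in>vcarrier (rmod R).
        ract R (vadd (rlie R) l1 l2) v = vadd (rmod R) (ract R l1 v) (ract R l2 v) \<and>
        ract R (lbr (rlie R) l1 l2) v
          = vsub (rmod R) (ract R l1 (ract R l2 v)) (ract R l2 (ract R l1 v))) \<and>
     (\<forall>l\<in>vcarrier (rlie R). \<forall>v\<in>vcarrier (rmod R). \<forall>w\<in>vcarrier (rmod R).
        ract R l (vadd (rmod R) v w) = vadd (rmod R) (ract R l v) (ract R l w)) \<and>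
     (\<forall>a. \<forall>l\<in>vcarrier (rlie R). \<forall>v\<in>vcarrier (rmod R).
        ract R (vsmul (rlie R) a l) v = vsmul (rmod R) a (ract R l v) \<and>
        ract R l (vsmul (rmod R) a v) = vsmul (rmod R) a (ract R l v))"

definition lin_map :: "('k::field, 'a, 'c) vs_scheme \<Rightarrow> ('k, 'b, 'd) vs_scheme \<Rightarrow> ('a \<Rightarrow> 'b) \<Rightarrow> bool" where
  "lin_map V W f \<longleftrightarrow> f ` vcarrier V \<subseteq> vcarrier W \<and>
     (\<forall>x\<in>vcarrier V. \<forall>y\<in>vcarrier V. f (vadd V x y) = vadd W (f x) (f y)) \<and>
     (\<forall>a. \<forall>x\<in>vcarrier V. f (vsmul V a x) = vsmul W a (f x))"

definition lie_hom :: "('k::field, 'a, 'c) lie_scheme \<Rightarrow> ('k, 'b, 'd) lie_scheme \<Rightarrow> ('a \<Rightarrow> 'b) \<Rightarrow> bool" where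
  "lie_hom L L' f \<longleftrightarrow> lin_map L L' f \<and>
     (\<forall>x\<in>vcarrier L. \<forall>y\<in>vcarrier L. f (lbr L x y) = lbr L' (f x) (f y))"

definition theta_hom :: "('k::field, 'a) theta \<Rightarrow> ('k, 'b) theta \<Rightarrow> ('a \<Rightarrow> 'b) \<Rightarrow> bool" where
  "theta_hom A B f \<longleftrightarrow> lie_hom A B f \<and> (\<forall>x\<in>vcarrier A. f (tproj A x) = tproj B (f x))"

definition rep_hom :: "('k::field, 'l, 'v) rep \<Rightarrow> ('k, 'l2, 'v2) rep \<Rightarrow> ('l \<Rightarrow> 'l2) \<Rightarrow> ('v \<Rightarrow> 'v2) \<Rightarrow> bool" where
  "rep_hom R R' \<phi> \<psi> \<longleftrightarrow> lie_hom (rlie R) (rlie R') \<phi> \<and> lin_map (rmod R) (rmod R') \<psi> \<and>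
     (\<forall>l\<in>vcarrier (rlie R). \<forall>v\<in>vcarrier (rmod R). ract R' (\<phi> l) (\<psi> v) = \<psi> (ract R l v))"

definition vker :: "('k, 'a, 'c) vs_scheme \<Rightarrow> ('k, 'b, 'd) vs_scheme \<Rightarrow> ('a \<Rightarrow> 'b) \<Rightarrow> 'a set" where
  "vker V W f = {x \<in> vcarrier V. f x = vzero W}"

section \<open>Congruences (described by their zero classes, i.e. ideals)\<close>

definition subspace :: "('k::field, 'a, 'c) vs_scheme \<Rightarrow> 'a set \<Rightarrow> bool" where
  "subspace V S \<longleftrightarrow> S \<subseteq> vcarrier V \<and> vzero V \<in> S \<and>
     (\<forall>x\<in>S. \<forall>y\<in>S. vadd V x y \<in> S) \<and> (\<forall>a. \<forall>x\<in>S. vsmul V a x \<in> S)"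

definition lie_ideal :: "('k::field, 'a, 'c) lie_scheme \<Rightarrow> 'a set \<Rightarrow> bool" where
  "lie_ideal L T \<longleftrightarrow> subspace L T \<and>
     (\<forall>x\<in>vcarrier L. \<forall>t\<in>T. lbr L x t \<in> T \<and> lbr L t x \<in> T)"

definition theta_cong :: "('k::field, 'a) theta \<Rightarrow> 'a set \<Rightarrow> bool" where
  "theta_cong A T \<longleftrightarrow> lie_ideal A T \<and> (\<forall>t\<in>T. tproj A t \<in> T)"

definition rep_cong :: "('k::field, 'l, 'v) rep \<Rightarrow> 'l set \<times> 'v set \<Rightarrow> bool" where
  "rep_cong R T \<longleftrightarrow> lie_ideal (rlie R) (fst T) \<and> subspace (rmod R) (snd T) \<and>
     (\<forall>l\<in>vcarrier (rlie R). \<forall>t\<in>snd T. ract R l t \<in> snd T) \<and>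
     (\<forall>t\<in>fst T. \<forall>v\<in>vcarrier (rmod R). ract R t v \<in> snd T)"

definition theta_closure :: "('k::field, 'a) theta \<Rightarrow> ('k, 'b) theta \<Rightarrow> 'a set \<Rightarrow> 'a set" where
  "theta_closure A N T =
     {x \<in> vcarrier A. \<forall>h. theta_hom A N h \<and> T \<subseteq> vker A N h \<longrightarrow> h x = vzero N}"

definition Cl_theta :: "('k::field, 'a) theta \<Rightarrow> ('k, 'b) theta \<Rightarrow> 'a set set" where
  "Cl_theta A N = {T. theta_closure A N T = T}"

definition rep_closure :: "('k::field, 'l, 'v) rep \<Rightarrow> ('k, 'l2, 'v2) rep \<Rightarrow> 'l set \<times> 'v set \<Rightarrow> 'l set \<times> 'v set" where
  "rep_closure R H T =
     ({l \<in> vcarrier (rlie R). \<forall>\<phi> \<psi>. rep_hom R H \<phi> \<psi> \<and> fst T \<subseteq> vker (rlie R) (rlie H) \<phi>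
          \<and> snd T \<subseteq> vker (rmod R) (rmod H) \<psi> \<longrightarrow> \<phi> l = vzero (rlie H)},
      {v \<in> vcarrier (rmod R). \<forall>\<phi> \<psi>. rep_hom R H \<phi> \<psi> \<and> fst T \<subseteq> vker (rlie R) (rlie H) \<phi>
          \<and> snd T \<subseteq> vker (rmod R) (rmod H) \<psi> \<longrightarrow> \<psi> v = vzero (rmod H)})"

definition Cl_rep :: "('k::field, 'l, 'v) rep \<Rightarrow> ('k, 'l2, 'v2) rep \<Rightarrow> ('l set \<times> 'v set) set" where
  "Cl_rep R H = {T. rep_closure R H T = T}"

definition Frep :: "('k::field, 'l, 'v) rep \<Rightarrow> ('k, 'l \<times> 'v) theta" where
  "Frep R = \<lparr> vcarrier = vcarrier (rlie R) \<times> vcarrier (rmod R),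
     vadd = (\<lambda>(l1, v1) (l2, v2). (vadd (rlie R) l1 l2, vadd (rmod R) v1 v2)),
     vzero = (vzero (rlie R), vzero (rmod R)),
     vsmul = (\<lambda>a (l, v). (vsmul (rlie R) a l, vsmul (rmod R) a v)),
     lbr = (\<lambda>(l1, v1) (l2, v2). (lbr (rlie R) l1 l2,
                                 vsub (rmod R) (ract R l1 v2) (ract R l2 v1))),
     tproj = (\<lambda>(l, v). (vzero (rlie R), v)) \<rparr>"

definition pker :: "('k, 'a) theta \<Rightarrow> 'a set" where
  "pker N = {x \<in> vcarrier N. tproj N x = vzero N}"

definition pim :: "('k, 'a) theta \<Rightarrow> 'a set" where
  "pim N = tproj N ` vcarrier N"

definition Finv :: "('k::field, 'a) theta \<Rightarrow> ('k, 'a, 'a) rep" where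
  "Finv N = \<lparr> rlie = \<lparr> vcarrier = pker N, vadd = vadd N, vzero = vzero N, vsmul = vsmul N,
                        lbr = lbr N \<rparr>,
              rmod = \<lparr> vcarrier = pim N, vadd = vadd N, vzero = vzero N, vsmul = vsmul N \<rparr>,
              ract = lbr N \<rparr>"

text \<open>\<open>A(X)\<close>: noncommutative polynomials in the letters \<open>X \<subseteq> nat\<close>, as finitely supported
coefficient functions on words; \<open>A(X)Y\<close>: the free \<open>A(X)\<close>-module with basis \<open>Y \<subseteq> nat\<close>,
as finitely supported coefficient functions on pairs (word, basis element).\<close>

definition Apoly :: "nat set \<Rightarrow> (nat list \<Rightarrow> 'k::field) set" where
  "Apoly X = {f. finite {w. f w \<noteq> 0} \<and> (\<forall>w. f w \<noteq> 0 \<longrightarrow> set w \<subseteq> X)}"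

definition Amod :: "nat set \<Rightarrow> nat set \<Rightarrow> (nat list \<times> nat \<Rightarrow> 'k::field) set" where
  "Amod X Y = {m. finite {u. m u \<noteq> 0} \<and> (\<forall>w y. m (w, y) \<noteq> 0 \<longrightarrow> set w \<subseteq> X \<and> y \<in> Y)}"

definition amul :: "(nat list \<Rightarrow> 'k::field) \<Rightarrow> (nat list \<Rightarrow> 'k) \<Rightarrow> nat list \<Rightarrow> 'k" where
  "amul f g = (\<lambda>w. \<Sum>i\<le>length w. f (take i w) * g (drop i w))"

definition aact :: "(nat list \<Rightarrow> 'k::field) \<Rightarrow> (nat list \<times> nat \<Rightarrow> 'k) \<Rightarrow> nat list \<times> nat \<Rightarrow> 'k" where
  "aact f m = (\<lambda>(w, y). \<Sum>i\<le>length w. f (take i w) * m (drop i w, y))"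

definition agen :: "nat \<Rightarrow> nat list \<Rightarrow> 'k::field" where
  "agen x = (\<lambda>w. if w = [x] then 1 else 0)"

text \<open>\<open>L(X)\<close>: the Lie subalgebra of \<open>A(X)\<close> (commutator bracket) generated by \<open>X\<close>;
this is the free Lie algebra on \<open>X\<close>.\<close>
inductive_set freeLie :: "nat set \<Rightarrow> (nat list \<Rightarrow> 'k::field) set" for X where
  gen: "x \<in> X \<Longrightarrow> agen x \<in> freeLie X"
| zero: "(\<lambda>w. 0) \<in> freeLie X"
| add: "f \<in> freeLie X \<Longrightarrow> g \<in> freeLie X \<Longrightarrow> (\<lambda>w. f w + g w) \<in> freeLie X"
| smul: "f \<in> freeLie X \<Longrightarrow> (\<lambda>w. a * f w) \<in> freeLie X"
| br: "f \<in> freeLie X \<Longrightarrow> g \<in> freeLie X \<Longrightarrow> (\<lambda>w. amul f g w - amul g f w) \<in> freeLie X"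

definition Wrep :: "nat set \<Rightarrow> nat set \<Rightarrow> ('k::field, nat list \<Rightarrow> 'k, nat list \<times> nat \<Rightarrow> 'k) rep" where
  "Wrep X Y = \<lparr> rlie = \<lparr> vcarrier = freeLie X, vadd = (\<lambda>f g w. f w + g w), vzero = (\<lambda>w. 0),
                         vsmul = (\<lambda>a f w. a * f w), lbr = (\<lambda>f g w. amul f g w - amul g f w) \<rparr>,
                rmod = \<lparr> vcarrier = Amod X Y, vadd = (\<lambda>f g u. f u + g u), vzero = (\<lambda>u. 0),
                         vsmul = (\<lambda>a f u. a * f u) \<rparr>,
                ract = aact \<rparr>"

text \<open>\<open>F\<close> (with embedding \<open>\<iota>\<close>) is free over \<open>M\<close> with respect to all \<open>\<Theta>\<close>-algebras whose
underlying HOL type is \<open>'b\<close> (HOL cannot quantify over all types inside a formula).\<close>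
definition theta_free :: "'b itself \<Rightarrow> ('k::field, 'a) theta \<Rightarrow> nat set \<Rightarrow> (nat \<Rightarrow> 'a) \<Rightarrow> bool" where
  "theta_free _ F M \<iota> \<longleftrightarrow> theta_alg F \<and> \<iota> ` M \<subseteq> vcarrier F \<and>
     (\<forall>(N :: ('k, 'b) theta) f. theta_alg N \<and> f ` M \<subseteq> vcarrier N \<longrightarrow>
        (\<exists>h. theta_hom F N h \<and> (\<forall>m\<in>M. h (\<iota> m) = f m) \<and>
             (\<forall>h'. theta_hom F N h' \<and> (\<forall>m\<in>M. h' (\<iota> m) = f m) \<longrightarrow>
                   (\<forall>x\<in>vcarrier F. h' x = h x))))"

end

theory Submission
  imports Defs
begin



locale vsp = fixes V :: "('k::field,'a,'c) vs_scheme" assumes ax: "vs_ax V"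
begin
lemma zero_c[simp]: "vzero V \<in> vcarrier V" using ax unfolding vs_ax_def by meson
lemma add_c[simp]: "x \<in> vcarrier V \<Longrightarrow> y \<in> vcarrier V \<Longrightarrow> vadd V x y \<in> vcarrier V" using ax unfolding vs_ax_def by meson
lemma smul_c[simp]: "x \<in> vcarrier V \<Longrightarrow> vsmul V a x \<in> vcarrier V" using ax unfolding vs_ax_def by meson
lemma assoc: "x \<in> vcarrier V \<Longrightarrow> y \<in> vcarrier V \<Longrightarrow> z \<in> vcarrier V \<Longrightarrow> vadd V (vadd V x y) z = vadd V x (vadd V y z)"
  using ax unfolding vs_ax_def by meson
lemma comm: "x \<in> vcarrier V \<Longrightarrow> y \<in> vcarrier V \<Longrightarrow> vadd V x y = vadd V y x" using ax unfolding vs_ax_def by meson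
lemma lzero[simp]: "x \<in> vcarrier V \<Longrightarrow> vadd V (vzero V) x = x" using ax unfolding vs_ax_def by meson
lemma rzero[simp]: "x \<in> vcarrier V \<Longrightarrow> vadd V x (vzero V) = x" using comm lzero zero_c by metis
lemma exneg: "x \<in> vcarrier V \<Longrightarrow> \<exists>y\<in>vcarrier V. vadd V x y = vzero V" using ax unfolding vs_ax_def by meson
lemma sdist: "x \<in> vcarrier V \<Longrightarrow> y \<in> vcarrier V \<Longrightarrow> vsmul V a (vadd V x y) = vadd V (vsmul V a x) (vsmul V a y)"
  using ax unfolding vs_ax_def by meson
lemma sdist2: "x \<in> vcarrier V \<Longrightarrow> vsmul V (a + b) x = vadd V (vsmul V a x) (vsmul V b x)"
  using ax unfolding vs_ax_def by meson
lemma smul_mult: "x \<in> vcarrier V \<Longrightarrow> vsmul V (a * b) x = vsmul V a (vsmul V b x)"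
  using ax unfolding vs_ax_def by meson
lemma smul_one[simp]: "x \<in> vcarrier V \<Longrightarrow> vsmul V 1 x = x"
  using ax unfolding vs_ax_def by meson
lemma lcancel: assumes "x \<in> vcarrier V" "y \<in> vcarrier V" "z \<in> vcarrier V" "vadd V x y = vadd V x z" shows "y = z"
proof -
  obtain n where n: "n \<in> vcarrier V" "vadd V x n = vzero V" using exneg assms(1) by blast
  have "y = vadd V (vadd V n x) y" using n assms comm by simp
  also have "\<dots> = vadd V n (vadd V x z)" using assoc assms n by simp
  also have "\<dots> = vadd V (vadd V n x) z" using assoc assms n by simp
  also have "\<dots> = z" using n assms comm by simp
  finally show ?thesis .
qed
lemma idem_zero: "x \<in> vcarrier V \<Longrightarrow> vadd V x x = x \<Longrightarrow> x = vzero V"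
  using lcancel[of x x "vzero V"] by simp
lemma smul_0k[simp]: "x \<in> vcarrier V \<Longrightarrow> vsmul V 0 x = vzero V"
  using idem_zero[of "vsmul V 0 x"] sdist2[of x 0 0] by simp
lemma smul_0v[simp]: "vsmul V a (vzero V) = vzero V"
  using idem_zero[of "vsmul V a (vzero V)"] sdist[of "vzero V" "vzero V" a] by simp
lemma neg_r: "x \<in> vcarrier V \<Longrightarrow> vadd V x (vsmul V (-1) x) = vzero V"
  using sdist2[of x 1 "-1"] by simp
lemma neg_l: "x \<in> vcarrier V \<Longrightarrow> vadd V (vsmul V (-1) x) x = vzero V"
  using neg_r comm by simp
lemma sub_c[simp]: "x \<in> vcarrier V \<Longrightarrow> y \<in> vcarrier V \<Longrightarrow> vsub V x y \<in> vcarrier V"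
  unfolding vsub_def by simp
lemma sub_zero[simp]: "x \<in> vcarrier V \<Longrightarrow> vsub V x (vzero V) = x"
  unfolding vsub_def by simp
lemma swap4: assumes "a \<in> vcarrier V" "b \<in> vcarrier V" "c \<in> vcarrier V" "d \<in> vcarrier V"
  shows "vadd V (vadd V a b) (vadd V c d) = vadd V (vadd V a c) (vadd V b d)"
proof -
  have "vadd V (vadd V a b) (vadd V c d) = vadd V a (vadd V b (vadd V c d))" using assms assoc by simp
  also have "vadd V b (vadd V c d) = vadd V (vadd V b c) d" using assms assoc by simp
  also have "vadd V b c = vadd V c b" using assms comm by simp
  also have "vadd V (vadd V c b) d = vadd V c (vadd V b d)" using assms assoc by simp
  also have "vadd V a (vadd V c (vadd V b d)) = vadd V (vadd V a c) (vadd V b d)" using assms assoc by simp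
  finally show ?thesis .
qed
lemma neg_unique: assumes "x \<in> vcarrier V" "y \<in> vcarrier V" "vadd V x y = vzero V" shows "y = vsmul V (-1) x"
  using lcancel[of x y "vsmul V (-1) x"] assms neg_r by simp
end

lemma lin_zero: assumes "vsp W" "z \<in> vcarrier V" "vadd V z z = z" "lin_map V W f" shows "f z = vzero W"
proof -
  have c: "f z \<in> vcarrier W" using assms(2,4) unfolding lin_map_def by blast
  have "f z = vadd W (f z) (f z)" using assms(2-4) unfolding lin_map_def by metis
  thus ?thesis using vsp.idem_zero[OF assms(1) c] by simp
qed

lemma lin_add: "lin_map V W f \<Longrightarrow> x \<in> vcarrier V \<Longrightarrow> y \<in> vcarrier V \<Longrightarrow> f (vadd V x y) = vadd W (f x) (f y)"
  unfolding lin_map_def by blast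
lemma lin_smul: "lin_map V W f \<Longrightarrow> x \<in> vcarrier V \<Longrightarrow> f (vsmul V a x) = vsmul W a (f x)"
  unfolding lin_map_def by blast
lemma lin_c: "lin_map V W f \<Longrightarrow> x \<in> vcarrier V \<Longrightarrow> f x \<in> vcarrier W"
  unfolding lin_map_def by blast
lemma lin_sub: "lin_map V W f \<Longrightarrow> vsp V \<Longrightarrow> x \<in> vcarrier V \<Longrightarrow> y \<in> vcarrier V \<Longrightarrow> f (vsub V x y) = vsub W (f x) (f y)"
  unfolding vsub_def by (simp add: lin_add lin_smul vsp.smul_c)

locale lsp = fixes L :: "('k::field,'a,'c) lie_scheme" assumes lax: "lie_ax L"
begin
sublocale vsp L using lax unfolding lie_ax_def vsp_def by meson
lemma br_c[simp]: "x \<in> vcarrier L \<Longrightarrow> y \<in> vcarrier L \<Longrightarrow> lbr L x y \<in> vcarrier L"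
  using lax unfolding lie_ax_def by meson
lemma br_addl: "x \<in> vcarrier L \<Longrightarrow> y \<in> vcarrier L \<Longrightarrow> z \<in> vcarrier L \<Longrightarrow> lbr L (vadd L x y) z = vadd L (lbr L x z) (lbr L y z)"
  using lax unfolding lie_ax_def by meson
lemma br_addr: "x \<in> vcarrier L \<Longrightarrow> y \<in> vcarrier L \<Longrightarrow> z \<in> vcarrier L \<Longrightarrow> lbr L z (vadd L x y) = vadd L (lbr L z x) (lbr L z y)"
  using lax unfolding lie_ax_def by meson
lemma br_smull: "x \<in> vcarrier L \<Longrightarrow> y \<in> vcarrier L \<Longrightarrow> lbr L (vsmul L a x) y = vsmul L a (lbr L x y)"
  using lax unfolding lie_ax_def by meson
lemma br_smulr: "x \<in> vcarrier L \<Longrightarrow> y \<in> vcarrier L \<Longrightarrow> lbr L x (vsmul L a y) = vsmul L a (lbr L x y)"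
  using lax unfolding lie_ax_def by meson
lemma br_self: "x \<in> vcarrier L \<Longrightarrow> lbr L x x = vzero L"
  using lax unfolding lie_ax_def by meson
lemma br_0l[simp]: "x \<in> vcarrier L \<Longrightarrow> lbr L (vzero L) x = vzero L"
  using idem_zero[of "lbr L (vzero L) x"] br_addl[of "vzero L" "vzero L" x] by simp
lemma br_0r[simp]: "x \<in> vcarrier L \<Longrightarrow> lbr L x (vzero L) = vzero L"
  using idem_zero[of "lbr L x (vzero L)"] br_addr[of "vzero L" "vzero L" x] by simp
lemma antisym: assumes "x \<in> vcarrier L" "y \<in> vcarrier L" shows "lbr L x y = vsmul L (-1) (lbr L y x)"
proof -
  have "vzero L = lbr L (vadd L y x) (vadd L y x)" using br_self assms by simp
  also have "\<dots> = vadd L (vadd L (lbr L y y) (lbr L x y)) (vadd L (lbr L y x) (lbr L x x))"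
    using assms br_addl br_addr by simp
  also have "\<dots> = vadd L (lbr L y x) (lbr L x y)" using assms br_self comm by simp
  finally show ?thesis using neg_unique[of "lbr L y x" "lbr L x y"] assms by simp
qed
end

locale tsp = fixes N :: "('k::field_char_0,'a) theta" assumes tax: "theta_alg N"
begin
sublocale lsp N using tax unfolding theta_alg_def lsp_def by meson
lemma p_c[simp]: "x \<in> vcarrier N \<Longrightarrow> tproj N x \<in> vcarrier N" using tax unfolding theta_alg_def by meson
lemma p_add: "x \<in> vcarrier N \<Longrightarrow> y \<in> vcarrier N \<Longrightarrow> tproj N (vadd N x y) = vadd N (tproj N x) (tproj N y)"
  using tax unfolding theta_alg_def by meson
lemma p_smul: "x \<in> vcarrier N \<Longrightarrow> tproj N (vsmul N a x) = vsmul N a (tproj N x)"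
  using tax unfolding theta_alg_def by meson
lemma p_idem[simp]: "x \<in> vcarrier N \<Longrightarrow> tproj N (tproj N x) = tproj N x"
  using tax unfolding theta_alg_def by meson
lemma p_der: "x \<in> vcarrier N \<Longrightarrow> y \<in> vcarrier N \<Longrightarrow> tproj N (lbr N x y) = vadd N (lbr N (tproj N x) y) (lbr N x (tproj N y))"
  using tax unfolding theta_alg_def by meson
lemma p_0[simp]: "tproj N (vzero N) = vzero N"
  using idem_zero[of "tproj N (vzero N)"] p_add[of "vzero N" "vzero N"] by simp
lemma pim_iff: "y \<in> pim N \<longleftrightarrow> y \<in> vcarrier N \<and> tproj N y = y"
  unfolding pim_def by (auto intro: image_eqI[where x=y])
lemma pker_iff: "y \<in> pker N \<longleftrightarrow> y \<in> vcarrier N \<and> tproj N y = vzero N"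
  unfolding pker_def by simp
lemma II_zero: assumes "b \<in> pim N" "d \<in> pim N" shows "lbr N b d = vzero N"
proof -
  have c: "b \<in> vcarrier N" "d \<in> vcarrier N" "tproj N b = b" "tproj N d = d" using assms pim_iff by auto
  define z where "z = lbr N b d"
  have zc: "z \<in> vcarrier N" using c z_def by simp
  define w where "w = vadd N z z"
  have wc: "w \<in> vcarrier N" using zc w_def by simp
  have pz: "tproj N z = w" using p_der[of b d] c unfolding z_def w_def by simp
  have "tproj N w = vadd N w w" using p_add[of z z] zc pz w_def by simp
  moreover have "tproj N w = w" using pz p_idem[OF zc] by simp
  ultimately have w0: "w = vzero N" using idem_zero[OF wc] by simp
  have e1: "vsmul N (1/2+1/2) z = vadd N (vsmul N (1/2) z) (vsmul N (1/2) z)" by (rule sdist2[OF zc])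
  have e2: "vsmul N (1/2) w = vadd N (vsmul N (1/2) z) (vsmul N (1/2) z)" unfolding w_def by (rule sdist[OF zc zc])
  have "z = vsmul N (1/2 + 1/2) z" using zc by simp
  also have "\<dots> = vsmul N (1/2) w" using e1 e2 by simp
  also have "\<dots> = vzero N" using w0 by simp
  finally show ?thesis unfolding z_def .
qed
lemma KI_dec: assumes "x \<in> vcarrier N"
  shows "vadd N x (vsmul N (-1) (tproj N x)) \<in> pker N" "tproj N x \<in> pim N"
    "vadd N (vadd N x (vsmul N (-1) (tproj N x))) (tproj N x) = x"
proof -
  show "vadd N x (vsmul N (-1) (tproj N x)) \<in> pker N" using assms p_add p_smul neg_r pker_iff by simp
  show "tproj N x \<in> pim N" using assms pim_iff by simp
  show "vadd N (vadd N x (vsmul N (-1) (tproj N x))) (tproj N x) = x" using assms assoc neg_l by simp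
qed
lemma KI_p: assumes "k \<in> pker N" "i \<in> pim N" shows "tproj N (vadd N k i) = i"
  using assms p_add pker_iff pim_iff by simp
lemma KI_sub: assumes "k \<in> pker N" "i \<in> pim N" shows "vadd N (vadd N k i) (vsmul N (-1) i) = k"
  using assms pker_iff pim_iff assoc neg_r by simp
end




lemma finv_hom_iff: "rep_hom (Finv A) (Finv B) \<phi> \<psi> \<longleftrightarrow>
  (\<forall>x\<in>pker A. \<phi> x \<in> pker B) \<and> (\<forall>x\<in>pker A. \<forall>y\<in>pker A. \<phi> (vadd A x y) = vadd B (\<phi> x) (\<phi> y)) \<and>
  (\<forall>a. \<forall>x\<in>pker A. \<phi> (vsmul A a x) = vsmul B a (\<phi> x)) \<and>
  (\<forall>x\<in>pker A. \<forall>y\<in>pker A. \<phi> (lbr A x y) = lbr B (\<phi> x) (\<phi> y)) \<and>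
  (\<forall>x\<in>pim A. \<psi> x \<in> pim B) \<and> (\<forall>x\<in>pim A. \<forall>y\<in>pim A. \<psi> (vadd A x y) = vadd B (\<psi> x) (\<psi> y)) \<and>
  (\<forall>a. \<forall>x\<in>pim A. \<psi> (vsmul A a x) = vsmul B a (\<psi> x)) \<and>
  (\<forall>l\<in>pker A. \<forall>v\<in>pim A. lbr B (\<phi> l) (\<psi> v) = \<psi> (lbr A l v))"
  unfolding rep_hom_def lie_hom_def lin_map_def Finv_def by auto

lemma theta_homD:
  assumes "theta_hom A B h"
  shows "x \<in> vcarrier A \<Longrightarrow> h x \<in> vcarrier B"
    "x \<in> vcarrier A \<Longrightarrow> y \<in> vcarrier A \<Longrightarrow> h (vadd A x y) = vadd B (h x) (h y)"
    "x \<in> vcarrier A \<Longrightarrow> h (vsmul A a x) = vsmul B a (h x)"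
    "x \<in> vcarrier A \<Longrightarrow> y \<in> vcarrier A \<Longrightarrow> h (lbr A x y) = lbr B (h x) (h y)"
    "x \<in> vcarrier A \<Longrightarrow> h (tproj A x) = tproj B (h x)"
  using assms unfolding theta_hom_def lie_hom_def lin_map_def by blast+

context fixes A :: "('k::field_char_0,'a) theta" and B :: "('k,'b) theta"
  assumes tA: "tsp A" and tB: "tsp B"
begin

interpretation a: tsp A by (rule tA)
interpretation b: tsp B by (rule tB)

lemma hom_0: "theta_hom A B h \<Longrightarrow> h (vzero A) = vzero B"
  using b.idem_zero[of "h (vzero A)"] theta_homD[of A B h] by (metis a.rzero a.zero_c)

lemma res_hom: assumes h: "theta_hom A B h" shows "rep_hom (Finv A) (Finv B) h h"
proof -
  note D = theta_homD[OF h]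
  have K: "h x \<in> pker B" if "x \<in> pker A" for x
    using that D(1,5) hom_0[OF h] a.pker_iff b.pker_iff by metis
  have I: "h x \<in> pim B" if "x \<in> pim A" for x
    using that D(1,5) a.pim_iff b.pim_iff by metis
  show ?thesis unfolding finv_hom_iff using K I D a.pker_iff a.pim_iff by simp
qed

definition ext :: "('a \<Rightarrow> 'b) \<Rightarrow> ('a \<Rightarrow> 'b) \<Rightarrow> 'a \<Rightarrow> 'b" where
  "ext \<phi> \<psi> x = vadd B (\<phi> (vadd A x (vsmul A (-1) (tproj A x)))) (\<psi> (tproj A x))"

lemma K_add: "x \<in> pker A \<Longrightarrow> y \<in> pker A \<Longrightarrow> vadd A x y \<in> pker A"
  using a.pker_iff a.p_add by simp
lemma K_smul: "x \<in> pker A \<Longrightarrow> vsmul A c x \<in> pker A"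
  using a.pker_iff a.p_smul by simp
lemma I_add: "x \<in> pim A \<Longrightarrow> y \<in> pim A \<Longrightarrow> vadd A x y \<in> pim A"
  using a.pim_iff a.p_add by simp
lemma I_smul: "x \<in> pim A \<Longrightarrow> vsmul A c x \<in> pim A"
  using a.pim_iff a.p_smul by simp
lemma K_br: "x \<in> pker A \<Longrightarrow> y \<in> pker A \<Longrightarrow> lbr A x y \<in> pker A"
  using a.pker_iff a.p_der by simp
lemma KI_br: "x \<in> pker A \<Longrightarrow> y \<in> pim A \<Longrightarrow> lbr A x y \<in> pim A"
  using a.pker_iff a.pim_iff a.p_der by simp

lemma ext_props:
  assumes r: "rep_hom (Finv A) (Finv B) \<phi> \<psi>"
  shows "theta_hom A B (ext \<phi> \<psi>)" "\<forall>x\<in>pker A. ext \<phi> \<psi> x = \<phi> x" "\<forall>x\<in>pim A. ext \<phi> \<psi> x = \<psi> x"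
proof -
  note R = r[unfolded finv_hom_iff]
  have fK: "\<phi> x \<in> pker B" if "x \<in> pker A" for x using R that by blast
  have gI: "\<psi> x \<in> pim B" if "x \<in> pim A" for x using R that by blast
  have fC: "\<phi> x \<in> vcarrier B" if "x \<in> pker A" for x using fK[OF that] b.pker_iff by blast
  have gC: "\<psi> x \<in> vcarrier B" if "x \<in> pim A" for x using gI[OF that] b.pim_iff by blast
  have fadd: "\<phi> (vadd A x y) = vadd B (\<phi> x) (\<phi> y)" if "x \<in> pker A" "y \<in> pker A" for x y using R that by blast
  have gadd: "\<psi> (vadd A x y) = vadd B (\<psi> x) (\<psi> y)" if "x \<in> pim A" "y \<in> pim A" for x y using R that by blast
  have fsm: "\<phi> (vsmul A c x) = vsmul B c (\<phi> x)" if "x \<in> pker A" for x c using R that by blast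
  have gsm: "\<psi> (vsmul A c x) = vsmul B c (\<psi> x)" if "x \<in> pim A" for x c using R that by blast
  have fbr: "\<phi> (lbr A x y) = lbr B (\<phi> x) (\<phi> y)" if "x \<in> pker A" "y \<in> pker A" for x y using R that by blast
  have act: "\<psi> (lbr A l v) = lbr B (\<phi> l) (\<psi> v)" if "l \<in> pker A" "v \<in> pim A" for l v using R that by metis
  have z0: "vzero A \<in> pker A" "vzero A \<in> pim A" using a.pker_iff a.pim_iff by auto
  have f0: "\<phi> (vzero A) = vzero B"
    using b.idem_zero[OF fC[OF z0(1)]] fadd[OF z0(1) z0(1)] by simp
  have g0: "\<psi> (vzero A) = vzero B"
    using b.idem_zero[OF gC[OF z0(2)]] gadd[OF z0(2) z0(2)] by simp
  have dec: "ext \<phi> \<psi> (vadd A k i) = vadd B (\<phi> k) (\<psi> i)" if "k \<in> pker A" "i \<in> pim A" for k i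
    unfolding ext_def using a.KI_p[OF that] a.KI_sub[OF that] by simp
  show eK: "\<forall>x\<in>pker A. ext \<phi> \<psi> x = \<phi> x"
    using dec[OF _ z0(2)] a.pker_iff f0 g0 fC by (metis a.rzero b.rzero)
  show eI: "\<forall>x\<in>pim A. ext \<phi> \<psi> x = \<psi> x"
    using dec[OF z0(1)] a.pim_iff f0 gC by (metis a.lzero b.lzero)
  define ka where "ka x = vadd A x (vsmul A (-1) (tproj A x))" for x
  have kaK: "ka x \<in> pker A" "tproj A x \<in> pim A" "vadd A (ka x) (tproj A x) = x"
     "ext \<phi> \<psi> x = vadd B (\<phi> (ka x)) (\<psi> (tproj A x))" if "x \<in> vcarrier A" for x
    using a.KI_dec[OF that] unfolding ka_def ext_def by auto
  have KC: "x \<in> pker A \<Longrightarrow> x \<in> vcarrier A" for x using a.pker_iff by blast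
  have IC: "x \<in> pim A \<Longrightarrow> x \<in> vcarrier A" for x using a.pim_iff by blast
  have extC: "ext \<phi> \<psi> x \<in> vcarrier B" if "x \<in> vcarrier A" for x
    using kaK[OF that] fC gC by simp
  have eadd: "ext \<phi> \<psi> (vadd A x y) = vadd B (ext \<phi> \<psi> x) (ext \<phi> \<psi> y)" if xy: "x \<in> vcarrier A" "y \<in> vcarrier A" for x y
  proof -
    note X = kaK[OF xy(1)] and Y = kaK[OF xy(2)]
    have "vadd A x y = vadd A (vadd A (ka x) (ka y)) (vadd A (tproj A x) (tproj A y))"
      using a.swap4[of "ka x" "tproj A x" "ka y" "tproj A y"] X Y KC IC by simp
    hence "ext \<phi> \<psi> (vadd A x y) = vadd B (\<phi> (vadd A (ka x) (ka y))) (\<psi> (vadd A (tproj A x) (tproj A y)))"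
      using dec K_add I_add X Y by simp
    also have "\<dots> = vadd B (vadd B (\<phi> (ka x)) (\<phi> (ka y))) (vadd B (\<psi> (tproj A x)) (\<psi> (tproj A y)))"
      using fadd gadd X Y by simp
    also have "\<dots> = vadd B (ext \<phi> \<psi> x) (ext \<phi> \<psi> y)"
      using b.swap4 X Y fC gC by simp
    finally show ?thesis .
  qed
  have esm: "ext \<phi> \<psi> (vsmul A c x) = vsmul B c (ext \<phi> \<psi> x)" if xy: "x \<in> vcarrier A" for x c
  proof -
    note X = kaK[OF xy(1)]
    have "vsmul A c x = vadd A (vsmul A c (ka x)) (vsmul A c (tproj A x))"
      using a.sdist X KC IC by metis
    hence "ext \<phi> \<psi> (vsmul A c x) = vadd B (\<phi> (vsmul A c (ka x))) (\<psi> (vsmul A c (tproj A x)))"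
      using dec K_smul I_smul X by simp
    also have "\<dots> = vsmul B c (ext \<phi> \<psi> x)"
      using fsm gsm b.sdist X fC gC by simp
    finally show ?thesis .
  qed
  have ep: "ext \<phi> \<psi> (tproj A x) = tproj B (ext \<phi> \<psi> x)" if xy: "x \<in> vcarrier A" for x
  proof -
    note X = kaK[OF xy(1)]
    have "tproj B (ext \<phi> \<psi> x) = \<psi> (tproj A x)"
      using X b.KI_p fK gI by simp
    thus ?thesis using eI X by simp
  qed
  have ebr: "ext \<phi> \<psi> (lbr A x y) = lbr B (ext \<phi> \<psi> x) (ext \<phi> \<psi> y)" if xy: "x \<in> vcarrier A" "y \<in> vcarrier A" for x y
  proof -
    note X = kaK[OF xy(1)] and Y = kaK[OF xy(2)]
    define a where "a = ka x" define bb where "bb = tproj A x"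
    define c where "c = ka y" define d where "d = tproj A y"
    have aK: "a \<in> pker A" and bI: "bb \<in> pim A" and cK: "c \<in> pker A" and dI: "d \<in> pim A"
      using X Y a_def bb_def c_def d_def by auto
    have aC: "a \<in> vcarrier A" and bC: "bb \<in> vcarrier A" and cC: "c \<in> vcarrier A" and dC: "d \<in> vcarrier A"
      using aK bI cK dI KC IC by auto
    have "lbr A x y = lbr A (vadd A a bb) (vadd A c d)" using X Y a_def bb_def c_def d_def by simp
    also have "\<dots> = vadd A (vadd A (lbr A a c) (lbr A a d)) (vadd A (lbr A bb c) (lbr A bb d))"
      by (simp only: a.br_addl[OF aC bC a.add_c[OF cC dC]] a.br_addr[OF cC dC aC] a.br_addr[OF cC dC bC])
    also have "\<dots> = vadd A (lbr A a c) (vadd A (lbr A a d) (lbr A bb c))"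
      by (simp only: a.II_zero[OF bI dI] a.rzero[OF a.br_c[OF bC cC]] a.assoc[OF a.br_c[OF aC cC] a.br_c[OF aC dC] a.br_c[OF bC cC]])
    finally have xy_eq: "lbr A x y = vadd A (lbr A a c) (vadd A (lbr A a d) (lbr A bb c))" .
    have bcI: "lbr A bb c \<in> pim A" using KI_br[OF cK bI] a.antisym[OF bC cC] I_smul by simp
    have adI: "lbr A a d \<in> pim A" using KI_br[OF aK dI] .
    have "ext \<phi> \<psi> (lbr A x y) = vadd B (\<phi> (lbr A a c)) (\<psi> (vadd A (lbr A a d) (lbr A bb c)))"
      using xy_eq dec K_br[OF aK cK] I_add[OF adI bcI] by simp
    also have "\<dots> = vadd B (lbr B (\<phi> a) (\<phi> c)) (vadd B (\<psi> (lbr A a d)) (\<psi> (lbr A bb c)))"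
      using fbr[OF aK cK] gadd[OF adI bcI] by simp
    also have "\<psi> (lbr A bb c) = lbr B (\<psi> bb) (\<phi> c)"
    proof -
      have "\<psi> (lbr A bb c) = \<psi> (vsmul A (-1) (lbr A c bb))" using a.antisym[OF bC cC] by simp
      also have "\<dots> = vsmul B (-1) (lbr B (\<phi> c) (\<psi> bb))" using gsm KI_br[OF cK bI] act[OF cK bI] by simp
      also have "\<dots> = lbr B (\<psi> bb) (\<phi> c)" using b.antisym[OF gC[OF bI] fC[OF cK]] by simp
      finally show ?thesis .
    qed
    also have "\<psi> (lbr A a d) = lbr B (\<phi> a) (\<psi> d)" using act[OF aK dI] .
    finally have L: "ext \<phi> \<psi> (lbr A x y) = vadd B (lbr B (\<phi> a) (\<phi> c)) (vadd B (lbr B (\<phi> a) (\<psi> d)) (lbr B (\<psi> bb) (\<phi> c)))" .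
    have fa: "\<phi> a \<in> vcarrier B" and fc: "\<phi> c \<in> vcarrier B" and gb: "\<psi> bb \<in> vcarrier B" and gd: "\<psi> d \<in> vcarrier B"
      using fC aK cK gC bI dI by auto
    have "lbr B (ext \<phi> \<psi> x) (ext \<phi> \<psi> y) = lbr B (vadd B (\<phi> a) (\<psi> bb)) (vadd B (\<phi> c) (\<psi> d))"
      using X Y a_def bb_def c_def d_def by simp
    also have "\<dots> = vadd B (vadd B (lbr B (\<phi> a) (\<phi> c)) (lbr B (\<phi> a) (\<psi> d))) (vadd B (lbr B (\<psi> bb) (\<phi> c)) (lbr B (\<psi> bb) (\<psi> d)))"
      by (simp only: b.br_addl[OF fa gb b.add_c[OF fc gd]] b.br_addr[OF fc gd fa] b.br_addr[OF fc gd gb])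
    also have "\<dots> = vadd B (lbr B (\<phi> a) (\<phi> c)) (vadd B (lbr B (\<phi> a) (\<psi> d)) (lbr B (\<psi> bb) (\<phi> c)))"
      by (simp only: b.II_zero[OF gI[OF bI] gI[OF dI]] b.rzero[OF b.br_c[OF gb fc]] b.assoc[OF b.br_c[OF fa fc] b.br_c[OF fa gd] b.br_c[OF gb fc]])
    finally show ?thesis using L by simp
  qed
  show "theta_hom A B (ext \<phi> \<psi>)"
    unfolding theta_hom_def lie_hom_def lin_map_def using extC eadd esm ebr ep by blast
qed

end



lemma finv_simps[simp]:
  "vcarrier (rlie (Finv A)) = pker A" "vcarrier (rmod (Finv A)) = pim A"
  "vzero (rlie (Finv A)) = vzero A" "vzero (rmod (Finv A)) = vzero A"
  "vker (rlie (Finv A)) (rlie (Finv B)) \<phi> = {x \<in> pker A. \<phi> x = vzero B}"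
  "vker (rmod (Finv A)) (rmod (Finv B)) \<psi> = {x \<in> pim A. \<psi> x = vzero B}"
  by (simp_all add: Finv_def vker_def)

lemma rep_closure_finv: "rep_closure (Finv A) (Finv B) P =
  ({l \<in> pker A. \<forall>\<phi> \<psi>. rep_hom (Finv A) (Finv B) \<phi> \<psi> \<and> fst P \<subseteq> {x \<in> pker A. \<phi> x = vzero B}
        \<and> snd P \<subseteq> {x \<in> pim A. \<psi> x = vzero B} \<longrightarrow> \<phi> l = vzero B},
   {v \<in> pim A. \<forall>\<phi> \<psi>. rep_hom (Finv A) (Finv B) \<phi> \<psi> \<and> fst P \<subseteq> {x \<in> pker A. \<phi> x = vzero B}
        \<and> snd P \<subseteq> {x \<in> pim A. \<psi> x = vzero B} \<longrightarrow> \<psi> v = vzero B})"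
  unfolding rep_closure_def by simp

lemma theta_closure_iff: "x \<in> theta_closure A B T \<longleftrightarrow> x \<in> vcarrier A \<and>
   (\<forall>h. theta_hom A B h \<and> (\<forall>t\<in>T. t \<in> vcarrier A \<and> h t = vzero B) \<longrightarrow> h x = vzero B)"
  unfolding theta_closure_def vker_def by (auto simp: subset_iff)

lemma mem_eqD: "a \<in> S \<Longrightarrow> P = S \<Longrightarrow> a \<in> P" by simp

lemma theta_closure_sub: "theta_closure A B T \<subseteq> vcarrier A"
  unfolding theta_closure_def by auto

lemma theta_closure_idem: assumes "S \<subseteq> vcarrier A"
  shows "theta_closure A B (theta_closure A B S) = theta_closure A B S"
proof -
  have "S \<subseteq> theta_closure A B S" using assms by (auto simp: theta_closure_iff)
  thus ?thesis unfolding theta_closure_iff set_eq_iff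
    by (smt (verit) subsetD theta_closure_iff)
qed

context fixes A :: "('k::field_char_0,'a) theta" and B :: "('k,'b) theta"
  assumes tA: "tsp A" and tB: "tsp B"
begin

interpretation a: tsp A by (rule tA)
interpretation b: tsp B by (rule tB)

lemma closed_rep: assumes cl: "theta_closure A B T = T"
  shows "rep_closure (Finv A) (Finv B) (T \<inter> pker A, T \<inter> pim A) = (T \<inter> pker A, T \<inter> pim A)"
proof -
  have T1: "x \<in> T" if x: "x \<in> vcarrier A" and H: "\<And>h. theta_hom A B h \<Longrightarrow> \<forall>x\<in>T \<inter> pker A. h x = vzero B
     \<Longrightarrow> \<forall>x\<in>T \<inter> pim A. h x = vzero B \<Longrightarrow> h x = vzero B" for x
  proof -
    have "x \<in> theta_closure A B T" unfolding theta_closure_iff using x H by blast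
    thus ?thesis using cl by simp
  qed
  have A1: "l \<in> T" if "l \<in> pker A" "\<forall>\<phi> \<psi>. rep_hom (Finv A) (Finv B) \<phi> \<psi> \<and> T \<inter> pker A \<subseteq> {x \<in> pker A. \<phi> x = vzero B}
        \<and> T \<inter> pim A \<subseteq> {x \<in> pim A. \<psi> x = vzero B} \<longrightarrow> \<phi> l = vzero B" for l
    apply (rule T1) using that a.pker_iff apply blast
    using that res_hom[OF tA tB] by blast
  have A2: "l \<in> T" if "l \<in> pim A" "\<forall>\<phi> \<psi>. rep_hom (Finv A) (Finv B) \<phi> \<psi> \<and> T \<inter> pker A \<subseteq> {x \<in> pker A. \<phi> x = vzero B}
        \<and> T \<inter> pim A \<subseteq> {x \<in> pim A. \<psi> x = vzero B} \<longrightarrow> \<psi> l = vzero B" for l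
    apply (rule T1) using that a.pim_iff apply blast
    using that res_hom[OF tA tB] by blast
  show ?thesis unfolding rep_closure_finv using A1 A2 by auto
qed

lemma mem_closed: assumes cl: "theta_closure A B T = T"
  shows "x \<in> T \<longleftrightarrow> x \<in> vcarrier A \<and> vadd A x (vsmul A (-1) (tproj A x)) \<in> T \<inter> pker A \<and> tproj A x \<in> T \<inter> pim A"
proof
  assume xT: "x \<in> T"
  have xC: "x \<in> vcarrier A" using xT cl theta_closure_sub[of A B T] by auto
  have hx: "h x = vzero B" if "theta_hom A B h" "\<forall>t\<in>T. t \<in> vcarrier A \<and> h t = vzero B" for h
    using that xT by blast
  have "tproj A x \<in> theta_closure A B T" unfolding theta_closure_iff
  proof (intro conjI allI impI)
    show "tproj A x \<in> vcarrier A" using xC by simp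
    fix h assume h: "theta_hom A B h \<and> (\<forall>t\<in>T. t \<in> vcarrier A \<and> h t = vzero B)"
    have "h (tproj A x) = tproj B (h x)" using theta_homD(5)[of A B h x] h xC by blast
    also have "h x = vzero B" using hx h by blast
    finally show "h (tproj A x) = vzero B" by simp
  qed
  hence pT: "tproj A x \<in> T" using cl by simp
  have "vadd A x (vsmul A (-1) (tproj A x)) \<in> theta_closure A B T" unfolding theta_closure_iff
  proof (intro conjI allI impI)
    show "vadd A x (vsmul A (-1) (tproj A x)) \<in> vcarrier A" using xC by simp
    fix h assume h: "theta_hom A B h \<and> (\<forall>t\<in>T. t \<in> vcarrier A \<and> h t = vzero B)"
    have 1: "h (tproj A x) = vzero B" using h pT by blast
    have 2: "h x = vzero B" using hx h by blast
    have "h (vadd A x (vsmul A (-1) (tproj A x))) = vadd B (h x) (vsmul B (-1) (h (tproj A x)))"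
      using theta_homD(2,3)[of A B h] h xC by simp
    thus "h (vadd A x (vsmul A (-1) (tproj A x))) = vzero B" using 1 2 by simp
  qed
  thus "x \<in> vcarrier A \<and> vadd A x (vsmul A (-1) (tproj A x)) \<in> T \<inter> pker A \<and> tproj A x \<in> T \<inter> pim A"
    using cl pT xC a.KI_dec[OF xC] by simp
next
  assume R: "x \<in> vcarrier A \<and> vadd A x (vsmul A (-1) (tproj A x)) \<in> T \<inter> pker A \<and> tproj A x \<in> T \<inter> pim A"
  have "x \<in> theta_closure A B T" unfolding theta_closure_iff
  proof (intro conjI allI impI)
    show "x \<in> vcarrier A" using R by simp
    fix h assume h: "theta_hom A B h \<and> (\<forall>t\<in>T. t \<in> vcarrier A \<and> h t = vzero B)"
    have "h x = h (vadd A (vadd A x (vsmul A (-1) (tproj A x))) (tproj A x))" using a.KI_dec R by simp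
    also have "\<dots> = vadd B (h (vadd A x (vsmul A (-1) (tproj A x)))) (h (tproj A x))"
      using theta_homD(2)[of A B h] h R by simp
    also have "\<dots> = vzero B" using h R by simp
    finally show "h x = vzero B" .
  qed
  thus "x \<in> T" using cl by simp
qed

lemma cong_rep: assumes c: "theta_cong A T" shows "rep_cong (Finv A) (T \<inter> pker A, T \<inter> pim A)"
proof -
  have TC: "T \<subseteq> vcarrier A" and z: "vzero A \<in> T" and ad: "\<And>x y. x \<in> T \<Longrightarrow> y \<in> T \<Longrightarrow> vadd A x y \<in> T"
    and sm: "\<And>x a. x \<in> T \<Longrightarrow> vsmul A a x \<in> T"
    and brl: "\<And>x t. x \<in> vcarrier A \<Longrightarrow> t \<in> T \<Longrightarrow> lbr A x t \<in> T"
    and brr: "\<And>x t. x \<in> vcarrier A \<Longrightarrow> t \<in> T \<Longrightarrow> lbr A t x \<in> T"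
    using c unfolding theta_cong_def lie_ideal_def subspace_def by blast+
  have K: "x \<in> pker A \<longleftrightarrow> x \<in> vcarrier A \<and> tproj A x = vzero A" for x using a.pker_iff .
  have I: "x \<in> pim A \<longleftrightarrow> x \<in> vcarrier A \<and> tproj A x = x" for x using a.pim_iff .
  show ?thesis
    unfolding rep_cong_def lie_ideal_def subspace_def
    apply (simp add: Finv_def)
    apply (intro conjI ballI allI)
    using TC z ad sm brl brr K I a.p_add a.p_smul a.p_der apply (auto simp: subset_iff)
    done
qed

lemma bij_F2: "bij_betw (\<lambda>T. (T \<inter> pker A, T \<inter> pim A)) (Cl_theta A B) (Cl_rep (Finv A) (Finv B))"
  unfolding bij_betw_def
proof (intro conjI)
  show "inj_on (\<lambda>T. (T \<inter> pker A, T \<inter> pim A)) (Cl_theta A B)"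
  proof (rule inj_onI)
    fix T T' assume c: "T \<in> Cl_theta A B" "T' \<in> Cl_theta A B"
      and e: "(T \<inter> pker A, T \<inter> pim A) = (T' \<inter> pker A, T' \<inter> pim A)"
    have c1: "theta_closure A B T = T" and c2: "theta_closure A B T' = T'" using c unfolding Cl_theta_def by auto
    have e1: "T \<inter> pker A = T' \<inter> pker A" and e2: "T \<inter> pim A = T' \<inter> pim A" using e by auto
    show "T = T'"
      apply (rule set_eqI)
      apply (subst mem_closed[OF c1])
      apply (subst mem_closed[OF c2])
      using e1 e2 by simp
  qed
  show "(\<lambda>T. (T \<inter> pker A, T \<inter> pim A)) ` Cl_theta A B = Cl_rep (Finv A) (Finv B)"
  proof
    show "(\<lambda>T. (T \<inter> pker A, T \<inter> pim A)) ` Cl_theta A B \<subseteq> Cl_rep (Finv A) (Finv B)"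
    proof (rule image_subsetI)
      fix T assume "T \<in> Cl_theta A B"
      hence "theta_closure A B T = T" unfolding Cl_theta_def by simp
      thus "(T \<inter> pker A, T \<inter> pim A) \<in> Cl_rep (Finv A) (Finv B)"
        using closed_rep unfolding Cl_rep_def by simp
    qed
  next
    show "Cl_rep (Finv A) (Finv B) \<subseteq> (\<lambda>T. (T \<inter> pker A, T \<inter> pim A)) ` Cl_theta A B"
    proof
      fix P assume "P \<in> Cl_rep (Finv A) (Finv B)"
      hence P: "rep_closure (Finv A) (Finv B) P = P" unfolding Cl_rep_def by simp
      obtain P1 P2 where Pe: "P = (P1, P2)" by fastforce
      have PP: "rep_closure (Finv A) (Finv B) (P1, P2) = (P1, P2)" using P Pe by simp
      have PP1: "fst (rep_closure (Finv A) (Finv B) (P1, P2)) = P1" using PP by simp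
      have PP2: "snd (rep_closure (Finv A) (Finv B) (P1, P2)) = P2" using PP by simp
      have P1: "P1 = {l \<in> pker A. \<forall>\<phi> \<psi>. rep_hom (Finv A) (Finv B) \<phi> \<psi> \<and> P1 \<subseteq> {x \<in> pker A. \<phi> x = vzero B}
        \<and> P2 \<subseteq> {x \<in> pim A. \<psi> x = vzero B} \<longrightarrow> \<phi> l = vzero B}"
        using PP1 unfolding rep_closure_finv fst_conv snd_conv by (rule sym)
      have P2: "P2 = {v \<in> pim A. \<forall>\<phi> \<psi>. rep_hom (Finv A) (Finv B) \<phi> \<psi> \<and> P1 \<subseteq> {x \<in> pker A. \<phi> x = vzero B}
        \<and> P2 \<subseteq> {x \<in> pim A. \<psi> x = vzero B} \<longrightarrow> \<psi> v = vzero B}"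
        using PP2 unfolding rep_closure_finv fst_conv snd_conv by (rule sym)
      have P1K: "P1 \<subseteq> pker A" using P1 by blast
      have P2I: "P2 \<subseteq> pim A" using P2 by blast
      have SC: "P1 \<union> P2 \<subseteq> vcarrier A" using P1K P2I a.pker_iff a.pim_iff by blast
      define T where "T = theta_closure A B (P1 \<union> P2)"
      have Tcl: "theta_closure A B T = T" unfolding T_def by (rule theta_closure_idem[OF SC])
      have z0T: "vzero A \<in> T" unfolding T_def theta_closure_iff using hom_0[OF tA tB] by simp
      have ST: "P1 \<union> P2 \<subseteq> T" unfolding T_def using SC by (auto simp: theta_closure_iff)
      have key: "\<phi> x = vzero B \<and> \<psi> y = vzero B"
        if r: "rep_hom (Finv A) (Finv B) \<phi> \<psi>" "\<forall>x\<in>P1. \<phi> x = vzero B" "\<forall>x\<in>P2. \<psi> x = vzero B"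
           and xT: "x \<in> T \<inter> pker A" and yT: "y \<in> T \<inter> pim A" for \<phi> \<psi> x y
      proof -
        note E = ext_props[OF tA tB r(1)]
        have "\<forall>t\<in>P1 \<union> P2. t \<in> vcarrier A \<and> ext A B \<phi> \<psi> t = vzero B"
          using SC E(2,3) P1K P2I r(2,3) by auto
        hence "ext A B \<phi> \<psi> x = vzero B \<and> ext A B \<phi> \<psi> y = vzero B"
          using E(1) xT yT unfolding T_def Int_iff theta_closure_iff by blast
        thus ?thesis using E(2,3) xT yT by auto
      qed
      have "T \<inter> pker A = P1"
      proof
        show "P1 \<subseteq> T \<inter> pker A" using ST P1K by blast
        show "T \<inter> pker A \<subseteq> P1"
        proof
          fix x assume xT: "x \<in> T \<inter> pker A"
          have "vzero A \<in> T \<inter> pim A" using z0T a.pim_iff by simp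
          hence "x \<in> {l \<in> pker A. \<forall>\<phi> \<psi>. rep_hom (Finv A) (Finv B) \<phi> \<psi> \<and> P1 \<subseteq> {x \<in> pker A. \<phi> x = vzero B}
            \<and> P2 \<subseteq> {x \<in> pim A. \<psi> x = vzero B} \<longrightarrow> \<phi> l = vzero B}"
            using key xT by blast
          thus "x \<in> P1" using P1 by (rule mem_eqD)
        qed
      qed
      moreover have "T \<inter> pim A = P2"
      proof
        show "P2 \<subseteq> T \<inter> pim A" using ST P2I by blast
        show "T \<inter> pim A \<subseteq> P2"
        proof
          fix y assume yT: "y \<in> T \<inter> pim A"
          have "vzero A \<in> T \<inter> pker A" using z0T a.pker_iff by simp
          hence "y \<in> {v \<in> pim A. \<forall>\<phi> \<psi>. rep_hom (Finv A) (Finv B) \<phi> \<psi> \<and> P1 \<subseteq> {x \<in> pker A. \<phi> x = vzero B}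
            \<and> P2 \<subseteq> {x \<in> pim A. \<psi> x = vzero B} \<longrightarrow> \<psi> v = vzero B}"
            using key yT by blast
          thus "y \<in> P2" using P2 by (rule mem_eqD)
        qed
      qed
      ultimately have True by simp
      show "P \<in> (\<lambda>T. (T \<inter> pker A, T \<inter> pim A)) ` Cl_theta A B"
      proof (rule image_eqI)
        show "T \<in> Cl_theta A B" using Tcl unfolding Cl_theta_def by simp
        show "P = (T \<inter> pker A, T \<inter> pim A)" using Pe \<open>T \<inter> pker A = P1\<close> \<open>T \<inter> pim A = P2\<close> by simp
      qed
    qed
  qed
qed

end



lemma amul_0r[simp]: "amul f (\<lambda>w. 0) = (\<lambda>w. 0)" by (simp add: amul_def)
lemma amul_0l[simp]: "amul (\<lambda>w. 0) f = (\<lambda>w. 0)" by (simp add: amul_def)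
lemma aact_0r[simp]: "aact f (\<lambda>u. 0) = (\<lambda>u. 0)" unfolding aact_def by (auto simp: fun_eq_iff)
lemma aact_0l[simp]: "aact (\<lambda>w. 0) m = (\<lambda>u. 0)" unfolding aact_def by (auto simp: fun_eq_iff)

lemma sum_nz: "sum f A \<noteq> 0 \<Longrightarrow> \<exists>i\<in>A. f i \<noteq> 0"
  using sum.neutral by metis

lemma amul_supp: "{w. amul f g w \<noteq> 0} \<subseteq> (\<lambda>(u,v). u @ v) ` ({u. f u \<noteq> 0} \<times> {v. g v \<noteq> 0})"
proof
  fix w assume "w \<in> {w. amul f g w \<noteq> 0}"
  hence "(\<Sum>i\<le>length w. f (take i w) * g (drop i w)) \<noteq> 0" by (simp add: amul_def)
  then obtain i where "f (take i w) * g (drop i w) \<noteq> 0" using sum_nz by blast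
  hence "f (take i w) \<noteq> 0" "g (drop i w) \<noteq> 0" by auto
  thus "w \<in> (\<lambda>(u,v). u @ v) ` ({u. f u \<noteq> 0} \<times> {v. g v \<noteq> 0})"
    by (intro image_eqI[where x="(take i w, drop i w)"]) auto
qed

lemma amul_Apoly: assumes "f \<in> Apoly X" "g \<in> Apoly X" shows "amul f g \<in> Apoly X"
proof -
  have "finite {w. amul f g w \<noteq> 0}"
    apply (rule finite_subset[OF amul_supp])
    using assms unfolding Apoly_def by simp
  moreover have "set w \<subseteq> X" if "amul f g w \<noteq> 0" for w
  proof -
    have "(\<Sum>i\<le>length w. f (take i w) * g (drop i w)) \<noteq> 0" using that by (simp add: amul_def)
    then obtain i where "f (take i w) * g (drop i w) \<noteq> 0" using sum_nz by blast
    hence "f (take i w) \<noteq> 0" "g (drop i w) \<noteq> 0" by auto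
    hence "set (take i w) \<subseteq> X" "set (drop i w) \<subseteq> X" using assms unfolding Apoly_def by auto
    thus ?thesis by (metis append_take_drop_id le_sup_iff set_append)
  qed
  ultimately show ?thesis unfolding Apoly_def by auto
qed

lemma freeLie_Apoly: "f \<in> freeLie X \<Longrightarrow> f \<in> Apoly X"
proof (induction rule: freeLie.induct)
  case (gen x)
  have "{w. agen x w \<noteq> (0::'a)} \<subseteq> {[x]}" by (auto simp: agen_def)
  hence "finite {w. agen x w \<noteq> (0::'a)}" by (rule finite_subset) simp
  thus ?case using gen by (auto simp: Apoly_def agen_def split: if_splits)
next
  case zero thus ?case by (simp add: Apoly_def)
next
  case (add f g)
  have "{w. f w + g w \<noteq> 0} \<subseteq> {w. f w \<noteq> 0} \<union> {w. g w \<noteq> 0}" by auto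
  hence "finite {w. f w + g w \<noteq> 0}" by (rule finite_subset) (use add.IH in \<open>simp add: Apoly_def\<close>)
  moreover have "\<forall>w. f w + g w \<noteq> 0 \<longrightarrow> set w \<subseteq> X"
  proof (intro allI impI)
    fix w assume "f w + g w \<noteq> 0" hence "f w \<noteq> 0 \<or> g w \<noteq> 0" by auto
    thus "set w \<subseteq> X" using add.IH unfolding Apoly_def by blast
  qed
  ultimately show ?case unfolding Apoly_def by simp
next
  case (smul f a)
  have "{w. a * f w \<noteq> 0} \<subseteq> {w. f w \<noteq> 0}" by auto
  hence "finite {w. a * f w \<noteq> 0}" by (rule finite_subset) (use smul.IH in \<open>simp add: Apoly_def\<close>)
  thus ?case using smul.IH unfolding Apoly_def by auto
next
  case (br f g)
  have A: "amul f g \<in> Apoly X" "amul g f \<in> Apoly X" using amul_Apoly br.IH by auto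
  have "{w. amul f g w - amul g f w \<noteq> 0} \<subseteq> {w. amul f g w \<noteq> 0} \<union> {w. amul g f w \<noteq> 0}" by auto
  hence "finite {w. amul f g w - amul g f w \<noteq> 0}" by (rule finite_subset) (use A in \<open>simp add: Apoly_def\<close>)
  moreover have "\<forall>w. amul f g w - amul g f w \<noteq> 0 \<longrightarrow> set w \<subseteq> X"
  proof (intro allI impI)
    fix w assume "amul f g w - amul g f w \<noteq> 0" hence "amul f g w \<noteq> 0 \<or> amul g f w \<noteq> 0" by auto
    thus "set w \<subseteq> X" using A unfolding Apoly_def by blast
  qed
  ultimately show ?case unfolding Apoly_def by simp
qed

lemma aact_Amod: assumes "f \<in> Apoly X" "m \<in> Amod X Y" shows "aact f m \<in> Amod X Y"
proof -
  have sub: "{u. aact f m u \<noteq> 0} \<subseteq> (\<lambda>(a,(b,y)). (a @ b, y)) ` ({u. f u \<noteq> 0} \<times> {u. m u \<noteq> 0})"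
  proof
    fix u assume "u \<in> {u. aact f m u \<noteq> 0}"
    then obtain w y where u: "u = (w, y)" and nz: "aact f m (w, y) \<noteq> 0" by (cases u) auto
    hence "(\<Sum>i\<le>length w. f (take i w) * m (drop i w, y)) \<noteq> 0" by (simp add: aact_def)
    then obtain i where "f (take i w) * m (drop i w, y) \<noteq> 0" using sum_nz by blast
    hence "f (take i w) \<noteq> 0" "m (drop i w, y) \<noteq> 0" by auto
    thus "u \<in> (\<lambda>(a,(b,y)). (a @ b, y)) ` ({u. f u \<noteq> 0} \<times> {u. m u \<noteq> 0})"
      using u by (intro image_eqI[where x="(take i w, (drop i w, y))"]) auto
  qed
  have "finite {u. aact f m u \<noteq> 0}"
    apply (rule finite_subset[OF sub])
    using assms unfolding Apoly_def Amod_def by simp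
  moreover have "set w \<subseteq> X \<and> y \<in> Y" if "aact f m (w, y) \<noteq> 0" for w y
  proof -
    have "(\<Sum>i\<le>length w. f (take i w) * m (drop i w, y)) \<noteq> 0" using that by (simp add: aact_def)
    then obtain i where "f (take i w) * m (drop i w, y) \<noteq> 0" using sum_nz by blast
    hence "f (take i w) \<noteq> 0" "m (drop i w, y) \<noteq> 0" by auto
    hence "set (take i w) \<subseteq> X" "set (drop i w) \<subseteq> X" "y \<in> Y" using assms unfolding Apoly_def Amod_def by auto
    thus ?thesis by (metis append_take_drop_id le_sup_iff set_append)
  qed
  ultimately show ?thesis unfolding Amod_def by auto
qed

lemma Amod_0: "(\<lambda>u. 0) \<in> Amod X Y" by (simp add: Amod_def)
lemma Amod_smul: assumes "m \<in> Amod X Y" shows "(\<lambda>u. a * m u) \<in> Amod X Y"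
proof -
  have "{u. a * m u \<noteq> 0} \<subseteq> {u. m u \<noteq> 0}" by auto
  thus ?thesis using assms unfolding Amod_def by (auto intro: finite_subset)
qed
lemma Amod_add: assumes "m \<in> Amod X Y" "n \<in> Amod X Y" shows "(\<lambda>u. m u + n u) \<in> Amod X Y"
proof -
  have "{u. m u + n u \<noteq> 0} \<subseteq> {u. m u \<noteq> 0} \<union> {u. n u \<noteq> 0}" by auto
  hence "finite {u. m u + n u \<noteq> 0}" by (rule finite_subset) (use assms in \<open>simp add: Amod_def\<close>)
  moreover have "\<forall>w y. m (w,y) + n (w,y) \<noteq> 0 \<longrightarrow> set w \<subseteq> X \<and> y \<in> Y"
  proof (intro allI impI)
    fix w y assume "m (w,y) + n (w,y) \<noteq> 0" hence "m (w,y) \<noteq> 0 \<or> n (w,y) \<noteq> 0" by auto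
    thus "set w \<subseteq> X \<and> y \<in> Y" using assms unfolding Amod_def by blast
  qed
  ultimately show ?thesis unfolding Amod_def by simp
qed

lemma W_simps:
  "vcarrier (rlie (Wrep X Y)) = freeLie X" "vcarrier (rmod (Wrep X Y)) = Amod X Y"
  "vadd (rlie (Wrep X Y)) = (\<lambda>f g w. f w + g w)" "vzero (rlie (Wrep X Y)) = (\<lambda>w. 0)"
  "vsmul (rlie (Wrep X Y)) = (\<lambda>a f w. a * f w)" "lbr (rlie (Wrep X Y)) = (\<lambda>f g w. amul f g w - amul g f w)"
  "vadd (rmod (Wrep X Y)) = (\<lambda>f g u. f u + g u)" "vzero (rmod (Wrep X Y)) = (\<lambda>u. 0)"
  "vsmul (rmod (Wrep X Y)) = (\<lambda>a f u. a * f u)" "ract (Wrep X Y) = aact"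
  by (simp_all add: Wrep_def)

lemma F_simps[simp]:
  "vcarrier (Frep R) = vcarrier (rlie R) \<times> vcarrier (rmod R)"
  "vadd (Frep R) (l1, v1) (l2, v2) = (vadd (rlie R) l1 l2, vadd (rmod R) v1 v2)"
  "vzero (Frep R) = (vzero (rlie R), vzero (rmod R))"
  "vsmul (Frep R) a (l, v) = (vsmul (rlie R) a l, vsmul (rmod R) a v)"
  "lbr (Frep R) (l1, v1) (l2, v2) = (lbr (rlie R) l1 l2, vsub (rmod R) (ract R l1 v2) (ract R l2 v1))"
  "tproj (Frep R) (l, v) = (vzero (rlie R), v)"
  by (simp_all add: Frep_def)




definition wfR :: "('k::field, 'l, 'v) rep \<Rightarrow> bool" where
  "wfR R \<longleftrightarrow> vzero (rlie R) \<in> vcarrier (rlie R) \<and> vzero (rmod R) \<in> vcarrier (rmod R) \<and>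
    (\<forall>l\<in>vcarrier (rlie R). vadd (rlie R) l (vzero (rlie R)) = l) \<and>
    (\<forall>v\<in>vcarrier (rmod R). vadd (rmod R) (vzero (rmod R)) v = v) \<and>
    (\<forall>l\<in>vcarrier (rlie R). lbr (rlie R) l (vzero (rlie R)) = vzero (rlie R)) \<and>
    (\<forall>l\<in>vcarrier (rlie R). ract R l (vzero (rmod R)) = vzero (rmod R)) \<and>
    (\<forall>v\<in>vcarrier (rmod R). vsub (rmod R) v (vzero (rmod R)) = v) \<and>
    (\<forall>l\<in>vcarrier (rlie R). \<forall>v\<in>vcarrier (rmod R). ract R l v \<in> vcarrier (rmod R)) \<and>
    (\<forall>a. \<forall>v\<in>vcarrier (rmod R). vsmul (rmod R) a v \<in> vcarrier (rmod R)) \<and>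
    (\<forall>a. vsmul (rlie R) a (vzero (rlie R)) = vzero (rlie R)) \<and>
    (\<forall>a. vsmul (rmod R) a (vzero (rmod R)) = vzero (rmod R))"

lemma wfR_W: "wfR (Wrep X Y)"
  unfolding wfR_def W_simps vsub_def
  using freeLie.zero[of X] Amod_0[of X Y] by (auto intro: aact_Amod freeLie_Apoly Amod_smul)

lemma Fp_simps[simp]:
  "fst (vadd (Frep R) x y) = vadd (rlie R) (fst x) (fst y)"
  "snd (vadd (Frep R) x y) = vadd (rmod R) (snd x) (snd y)"
  "fst (vsmul (Frep R) a x) = vsmul (rlie R) a (fst x)"
  "snd (vsmul (Frep R) a x) = vsmul (rmod R) a (snd x)"
  "fst (lbr (Frep R) x y) = lbr (rlie R) (fst x) (fst y)"
  "snd (lbr (Frep R) x y) = vsub (rmod R) (ract R (fst x) (snd y)) (ract R (fst y) (snd x))"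
  "fst (tproj (Frep R) x) = vzero (rlie R)"
  "snd (tproj (Frep R) x) = snd x"
  by (cases x; cases y; simp)+

lemma pair_eqI2: "fst x = fst y \<Longrightarrow> snd x = snd y \<Longrightarrow> x = y" by (simp add: prod_eq_iff)

context fixes R :: "('k::field, 'l, 'v) rep" and H :: "('k, 'l2, 'v2) rep"
  assumes wR: "wfR R" and rH: "rep_alg H"
begin

interpretation hl: vsp "rlie H" using rH unfolding rep_alg_def lie_ax_def vsp_def by blast
interpretation hm: vsp "rmod H" using rH unfolding rep_alg_def vsp_def by blast

lemma H_act_c: "l \<in> vcarrier (rlie H) \<Longrightarrow> v \<in> vcarrier (rmod H) \<Longrightarrow> ract H l v \<in> vcarrier (rmod H)"
  using rH unfolding rep_alg_def by blast
lemma H_act_0: assumes "l \<in> vcarrier (rlie H)" shows "ract H l (vzero (rmod H)) = vzero (rmod H)"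
proof -
  have "ract H l (vadd (rmod H) (vzero (rmod H)) (vzero (rmod H))) = vadd (rmod H) (ract H l (vzero (rmod H))) (ract H l (vzero (rmod H)))"
    using rH assms unfolding rep_alg_def by (meson hm.zero_c)
  thus ?thesis using hm.idem_zero[OF H_act_c[OF assms hm.zero_c]] by simp
qed

lemmas wf = wR[unfolded wfR_def]
lemma wf0: "vzero (rlie R) \<in> vcarrier (rlie R)" "vzero (rmod R) \<in> vcarrier (rmod R)" using wf by auto
lemma wf_addz: "l \<in> vcarrier (rlie R) \<Longrightarrow> vadd (rlie R) l (vzero (rlie R)) = l"
  "v \<in> vcarrier (rmod R) \<Longrightarrow> vadd (rmod R) (vzero (rmod R)) v = v" using wf by auto
lemma wf_00: "vadd (rlie R) (vzero (rlie R)) (vzero (rlie R)) = vzero (rlie R)"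
  "vadd (rmod R) (vzero (rmod R)) (vzero (rmod R)) = vzero (rmod R)" using wf by auto
lemma wf_br0: "l \<in> vcarrier (rlie R) \<Longrightarrow> lbr (rlie R) l (vzero (rlie R)) = vzero (rlie R)" using wf by auto
lemma wf_act0: "l \<in> vcarrier (rlie R) \<Longrightarrow> ract R l (vzero (rmod R)) = vzero (rmod R)" using wf by auto
lemma wf_sub0: "v \<in> vcarrier (rmod R) \<Longrightarrow> vsub (rmod R) v (vzero (rmod R)) = v" using wf by auto
lemma wf_actc: "l \<in> vcarrier (rlie R) \<Longrightarrow> v \<in> vcarrier (rmod R) \<Longrightarrow> ract R l v \<in> vcarrier (rmod R)" using wf by auto
lemma wf_smc: "v \<in> vcarrier (rmod R) \<Longrightarrow> vsmul (rmod R) a v \<in> vcarrier (rmod R)" using wf by auto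
lemma wf_sm0: "vsmul (rlie R) a (vzero (rlie R)) = vzero (rlie R)" "vsmul (rmod R) a (vzero (rmod R)) = vzero (rmod R)" using wf by auto

lemma lift_hom: assumes r: "rep_hom R H \<phi> \<psi>"
  shows "theta_hom (Frep R) (Frep H) (\<lambda>x. (\<phi> (fst x), \<psi> (snd x)))"
proof -
  have lp: "lin_map (rlie R) (rlie H) \<phi>" and lm: "lin_map (rmod R) (rmod H) \<psi>"
    and br: "\<And>x y. x \<in> vcarrier (rlie R) \<Longrightarrow> y \<in> vcarrier (rlie R) \<Longrightarrow> \<phi> (lbr (rlie R) x y) = lbr (rlie H) (\<phi> x) (\<phi> y)"
    and act: "\<And>l v. l \<in> vcarrier (rlie R) \<Longrightarrow> v \<in> vcarrier (rmod R) \<Longrightarrow> ract H (\<phi> l) (\<psi> v) = \<psi> (ract R l v)"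
    using r unfolding rep_hom_def lie_hom_def by blast+
  have f0: "\<phi> (vzero (rlie R)) = vzero (rlie H)"
    by (rule lin_zero[OF _ wf0(1) wf_00(1) lp]) (unfold_locales)
  have sub: "\<psi> (vsub (rmod R) a b) = vsub (rmod H) (\<psi> a) (\<psi> b)" if "a \<in> vcarrier (rmod R)" "b \<in> vcarrier (rmod R)" for a b
    unfolding vsub_def using lin_add[OF lm that(1) wf_smc[OF that(2)]] lin_smul[OF lm that(2)] by simp
  show ?thesis
    unfolding theta_hom_def lie_hom_def lin_map_def
  proof (intro conjI ballI allI)
    show "(\<lambda>x. (\<phi> (fst x), \<psi> (snd x))) ` vcarrier (Frep R) \<subseteq> vcarrier (Frep H)"
      using lin_c[OF lp] lin_c[OF lm] by auto
    fix x y assume x: "x \<in> vcarrier (Frep R)" and y: "y \<in> vcarrier (Frep R)"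
    show "(\<phi> (fst (vadd (Frep R) x y)), \<psi> (snd (vadd (Frep R) x y))) = vadd (Frep H) (\<phi> (fst x), \<psi> (snd x)) (\<phi> (fst y), \<psi> (snd y))"
      using x y lin_add[OF lp] lin_add[OF lm] by (auto simp: mem_Times_iff)
    show "(\<phi> (fst (lbr (Frep R) x y)), \<psi> (snd (lbr (Frep R) x y))) = lbr (Frep H) (\<phi> (fst x), \<psi> (snd x)) (\<phi> (fst y), \<psi> (snd y))"
      using x y br act sub wf_actc by (auto simp: mem_Times_iff)
  next
    fix a x assume x: "x \<in> vcarrier (Frep R)"
    show "(\<phi> (fst (vsmul (Frep R) a x)), \<psi> (snd (vsmul (Frep R) a x))) = vsmul (Frep H) a (\<phi> (fst x), \<psi> (snd x))"
      using x lin_smul[OF lp] lin_smul[OF lm] by (auto simp: mem_Times_iff)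
  next
    fix x assume x: "x \<in> vcarrier (Frep R)"
    show "(\<phi> (fst (tproj (Frep R) x)), \<psi> (snd (tproj (Frep R) x))) = tproj (Frep H) (\<phi> (fst x), \<psi> (snd x))"
      using f0 by simp
  qed
qed


lemma proj_hom: assumes h: "theta_hom (Frep R) (Frep H) h"
  shows "rep_hom R H (\<lambda>l. fst (h (l, vzero (rmod R)))) (\<lambda>v. snd (h (vzero (rlie R), v)))"
    "\<forall>x\<in>vcarrier (Frep R). h x = (fst (h (fst x, vzero (rmod R))), snd (h (vzero (rlie R), snd x)))"
proof -
  define zL where "zL = vzero (rlie R)"
  define zV where "zV = vzero (rmod R)"
  define \<phi> where "\<phi> l = fst (h (l, zV))" for l
  define \<psi> where "\<psi> v = snd (h (zL, v))" for v
  note D = theta_homD[OF h]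
  have zc: "zL \<in> vcarrier (rlie R)" "zV \<in> vcarrier (rmod R)" using wf0 zL_def zV_def by auto
  have hc: "fst (h (l, v)) \<in> vcarrier (rlie H) \<and> snd (h (l, v)) \<in> vcarrier (rmod H)"
    if "l \<in> vcarrier (rlie R)" "v \<in> vcarrier (rmod R)" for l v
    using D(1)[of "(l,v)"] that by (auto simp: mem_Times_iff)
  have hz: "h (zL, zV) = (vzero (rlie H), vzero (rmod H))"
  proof -
    have "h (zL, zV) = h (vadd (Frep R) (zL, zV) (zL, zV))" using wf_00 zL_def zV_def by simp
    also have "\<dots> = vadd (Frep H) (h (zL, zV)) (h (zL, zV))" by (rule D(2)) (use zc in auto)
    finally have e: "h (zL, zV) = vadd (Frep H) (h (zL, zV)) (h (zL, zV))" .
    have e1: "fst (h (zL,zV)) = vadd (rlie H) (fst (h (zL,zV))) (fst (h (zL,zV)))"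
      using arg_cong[OF e, of fst] by (simp only: Fp_simps)
    have e2: "snd (h (zL,zV)) = vadd (rmod H) (snd (h (zL,zV))) (snd (h (zL,zV)))"
      using arg_cong[OF e, of snd] by (simp only: Fp_simps)
    have "fst (h (zL, zV)) = vzero (rlie H)"
      using hl.idem_zero[OF conjunct1[OF hc[OF zc]] e1[symmetric]] .
    moreover have "snd (h (zL, zV)) = vzero (rmod H)"
      using hm.idem_zero[OF conjunct2[OF hc[OF zc]] e2[symmetric]] .
    ultimately show ?thesis by (simp add: prod_eq_iff)
  qed
  have sndK: "snd (h (l, zV)) = vzero (rmod H)" if "l \<in> vcarrier (rlie R)" for l
  proof -
    have "tproj (Frep H) (h (l, zV)) = h (tproj (Frep R) (l, zV))" by (rule D(5)[symmetric]) (use that zc in auto)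
    also have "\<dots> = h (zL, zV)" using zL_def by simp
    finally show ?thesis using hz arg_cong[of _ _ snd] by (metis Fp_simps(8) snd_conv)
  qed
  have fstI: "fst (h (zL, v)) = vzero (rlie H)" if "v \<in> vcarrier (rmod R)" for v
  proof -
    have "h (zL, v) = h (tproj (Frep R) (zL, v))" using zL_def by simp
    also have "\<dots> = tproj (Frep H) (h (zL, v))" by (rule D(5)) (use that zc in auto)
    finally show ?thesis by (metis Fp_simps(7))
  qed
  have dec: "h (l, v) = (\<phi> l, \<psi> v)" if "l \<in> vcarrier (rlie R)" "v \<in> vcarrier (rmod R)" for l v
  proof -
    have "h (l, v) = h (vadd (Frep R) (l, zV) (zL, v))" using wf_addz that zL_def zV_def by simp
    also have "\<dots> = vadd (Frep H) (h (l, zV)) (h (zL, v))" by (rule D(2)) (use that zc in auto)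
    finally show ?thesis using sndK fstI that hc zc \<phi>_def \<psi>_def by (simp add: prod_eq_iff)
  qed
  show "\<forall>x\<in>vcarrier (Frep R). h x = (fst (h (fst x, vzero (rmod R))), snd (h (vzero (rlie R), snd x)))"
    using dec unfolding \<phi>_def \<psi>_def zL_def zV_def by (auto simp: mem_Times_iff)
  have linp: "lin_map (rlie R) (rlie H) \<phi>"
    unfolding lin_map_def
  proof (intro conjI ballI allI)
    show "\<phi> ` vcarrier (rlie R) \<subseteq> vcarrier (rlie H)" using hc zc \<phi>_def by auto
    fix x y assume xy: "x \<in> vcarrier (rlie R)" "y \<in> vcarrier (rlie R)"
    have "h (vadd (rlie R) x y, zV) = h (vadd (Frep R) (x, zV) (y, zV))" using wf_00 zV_def by simp
    also have "\<dots> = vadd (Frep H) (h (x, zV)) (h (y, zV))" by (rule D(2)) (use xy zc in auto)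
    finally have "h (vadd (rlie R) x y, zV) = vadd (Frep H) (h (x, zV)) (h (y, zV))" .
    thus "\<phi> (vadd (rlie R) x y) = vadd (rlie H) (\<phi> x) (\<phi> y)" unfolding \<phi>_def by simp
  next
    fix a x assume x: "x \<in> vcarrier (rlie R)"
    have "h (vsmul (rlie R) a x, zV) = h (vsmul (Frep R) a (x, zV))" using wf_sm0 zV_def by simp
    also have "\<dots> = vsmul (Frep H) a (h (x, zV))" by (rule D(3)) (use x zc in auto)
    finally have "h (vsmul (rlie R) a x, zV) = vsmul (Frep H) a (h (x, zV))" .
    thus "\<phi> (vsmul (rlie R) a x) = vsmul (rlie H) a (\<phi> x)" unfolding \<phi>_def by simp
  qed
  have linm: "lin_map (rmod R) (rmod H) \<psi>"
    unfolding lin_map_def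
  proof (intro conjI ballI allI)
    show "\<psi> ` vcarrier (rmod R) \<subseteq> vcarrier (rmod H)" using hc zc \<psi>_def by auto
    fix x y assume xy: "x \<in> vcarrier (rmod R)" "y \<in> vcarrier (rmod R)"
    have "h (zL, vadd (rmod R) x y) = h (vadd (Frep R) (zL, x) (zL, y))" using wf_00 zL_def by simp
    also have "\<dots> = vadd (Frep H) (h (zL, x)) (h (zL, y))" by (rule D(2)) (use xy zc in auto)
    finally have "h (zL, vadd (rmod R) x y) = vadd (Frep H) (h (zL, x)) (h (zL, y))" .
    thus "\<psi> (vadd (rmod R) x y) = vadd (rmod H) (\<psi> x) (\<psi> y)" unfolding \<psi>_def by simp
  next
    fix a x assume x: "x \<in> vcarrier (rmod R)"
    have "h (zL, vsmul (rmod R) a x) = h (vsmul (Frep R) a (zL, x))" using wf_sm0 zL_def by simp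
    also have "\<dots> = vsmul (Frep H) a (h (zL, x))" by (rule D(3)) (use x zc in auto)
    finally have "h (zL, vsmul (rmod R) a x) = vsmul (Frep H) a (h (zL, x))" .
    thus "\<psi> (vsmul (rmod R) a x) = vsmul (rmod H) a (\<psi> x)" unfolding \<psi>_def by simp
  qed
  have brp: "\<phi> (lbr (rlie R) x y) = lbr (rlie H) (\<phi> x) (\<phi> y)" if xy: "x \<in> vcarrier (rlie R)" "y \<in> vcarrier (rlie R)" for x y
  proof -
    have "h (lbr (rlie R) x y, zV) = h (lbr (Frep R) (x, zV) (y, zV))"
      using wf_act0 xy wf_sub0 zc zV_def by simp
    also have "\<dots> = lbr (Frep H) (h (x, zV)) (h (y, zV))" by (rule D(4)) (use xy zc in auto)
    finally have "h (lbr (rlie R) x y, zV) = lbr (Frep H) (h (x, zV)) (h (y, zV))" .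
    thus ?thesis unfolding \<phi>_def by simp
  qed
  have actp: "ract H (\<phi> l) (\<psi> v) = \<psi> (ract R l v)" if lv: "l \<in> vcarrier (rlie R)" "v \<in> vcarrier (rmod R)" for l v
  proof -
    have "h (zL, ract R l v) = h (lbr (Frep R) (l, zV) (zL, v))"
      using wf_br0 wf_act0 wf_sub0 wf_actc lv zc zL_def zV_def by simp
    also have "\<dots> = lbr (Frep H) (h (l, zV)) (h (zL, v))" by (rule D(4)) (use lv zc in auto)
    finally have "h (zL, ract R l v) = lbr (Frep H) (h (l, zV)) (h (zL, v))" .
    hence "\<psi> (ract R l v) = vsub (rmod H) (ract H (\<phi> l) (\<psi> v)) (ract H (vzero (rlie H)) (vzero (rmod H)))"
      unfolding \<psi>_def \<phi>_def using sndK[OF lv(1)] fstI[OF lv(2)] by simp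
    thus ?thesis using H_act_0 hm.sub_zero H_act_c hc lv zc \<phi>_def \<psi>_def by simp
  qed
  show "rep_hom R H (\<lambda>l. fst (h (l, vzero (rmod R)))) (\<lambda>v. snd (h (vzero (rlie R), v)))"
    unfolding rep_hom_def lie_hom_def using linp linm brp actp unfolding \<phi>_def \<psi>_def zL_def zV_def by blast
qed

lemma KL1: "theta_closure (Frep R) (Frep H) S =
  fst (rep_closure R H (fst ` S, snd ` S)) \<times> snd (rep_closure R H (fst ` S, snd ` S))"
proof -
  have vk: "vker (Frep R) (Frep H) (\<lambda>x. (\<phi> (fst x), \<psi> (snd x))) = vker (rlie R) (rlie H) \<phi> \<times> vker (rmod R) (rmod H) \<psi>" for \<phi> \<psi>
    unfolding vker_def by auto
  have sub: "S \<subseteq> A \<times> B \<longleftrightarrow> fst ` S \<subseteq> A \<and> snd ` S \<subseteq> B" for A B by fastforce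
  show ?thesis
  proof (rule set_eqI)
    fix x :: "'l \<times> 'v"
    obtain l v where xe: "x = (l, v)" by fastforce
    show "x \<in> theta_closure (Frep R) (Frep H) S \<longleftrightarrow>
      x \<in> fst (rep_closure R H (fst ` S, snd ` S)) \<times> snd (rep_closure R H (fst ` S, snd ` S))"
    proof
      assume xc: "x \<in> theta_closure (Frep R) (Frep H) S"
      hence lv: "l \<in> vcarrier (rlie R)" "v \<in> vcarrier (rmod R)" using xe unfolding theta_closure_def by auto
      have "\<phi> l = vzero (rlie H) \<and> \<psi> v = vzero (rmod H)"
        if "rep_hom R H \<phi> \<psi>" "fst ` S \<subseteq> vker (rlie R) (rlie H) \<phi>" "snd ` S \<subseteq> vker (rmod R) (rmod H) \<psi>" for \<phi> \<psi>
      proof -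
        have "theta_hom (Frep R) (Frep H) (\<lambda>x. (\<phi> (fst x), \<psi> (snd x)))" using lift_hom that(1) .
        moreover have "S \<subseteq> vker (Frep R) (Frep H) (\<lambda>x. (\<phi> (fst x), \<psi> (snd x)))" using vk sub that(2,3) by simp
        ultimately have "(\<phi> l, \<psi> v) = vzero (Frep H)" using xc xe unfolding theta_closure_def by force
        thus ?thesis by simp
      qed
      thus "x \<in> fst (rep_closure R H (fst ` S, snd ` S)) \<times> snd (rep_closure R H (fst ` S, snd ` S))"
        using xe lv unfolding rep_closure_def by auto
    next
      assume xr: "x \<in> fst (rep_closure R H (fst ` S, snd ` S)) \<times> snd (rep_closure R H (fst ` S, snd ` S))"
      have lv: "l \<in> vcarrier (rlie R)" "v \<in> vcarrier (rmod R)" using xr xe unfolding rep_closure_def by auto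
      have "h (l, v) = vzero (Frep H)" if h: "theta_hom (Frep R) (Frep H) h" "S \<subseteq> vker (Frep R) (Frep H) h" for h
      proof -
        note P = proj_hom[OF h(1)]
        define \<phi> where "\<phi> l = fst (h (l, vzero (rmod R)))" for l
        define \<psi> where "\<psi> v = snd (h (vzero (rlie R), v))" for v
        have eq: "\<forall>x\<in>vcarrier (Frep R). h x = (\<phi> (fst x), \<psi> (snd x))" using P(2) \<phi>_def \<psi>_def by simp
        have "vker (Frep R) (Frep H) h = vker (Frep R) (Frep H) (\<lambda>x. (\<phi> (fst x), \<psi> (snd x)))"
          unfolding vker_def using eq by auto
        hence "fst ` S \<subseteq> vker (rlie R) (rlie H) \<phi> \<and> snd ` S \<subseteq> vker (rmod R) (rmod H) \<psi>" using h(2) vk sub by simp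
        moreover have "rep_hom R H \<phi> \<psi>" unfolding \<phi>_def[abs_def] \<psi>_def[abs_def] by (rule P(1))
        ultimately have "\<phi> l = vzero (rlie H) \<and> \<psi> v = vzero (rmod H)"
          using xr xe unfolding rep_closure_def by auto
        thus ?thesis using eq lv by simp
      qed
      thus "x \<in> theta_closure (Frep R) (Frep H) S" using xe lv unfolding theta_closure_def by auto
    qed
  qed
qed

lemma rc_zero: "vzero (rlie R) \<in> fst (rep_closure R H T)" "vzero (rmod R) \<in> snd (rep_closure R H T)"
proof -
  have "\<phi> (vzero (rlie R)) = vzero (rlie H) \<and> \<psi> (vzero (rmod R)) = vzero (rmod H)" if "rep_hom R H \<phi> \<psi>" for \<phi> \<psi>
  proof -
    have "lin_map (rlie R) (rlie H) \<phi>" "lin_map (rmod R) (rmod H) \<psi>" using that unfolding rep_hom_def lie_hom_def by auto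
    thus ?thesis using lin_zero[OF _ wf0(1) wf_00(1)] lin_zero[OF _ wf0(2) wf_00(2)] hl.vsp_axioms hm.vsp_axioms by blast
  qed
  thus "vzero (rlie R) \<in> fst (rep_closure R H T)" "vzero (rmod R) \<in> snd (rep_closure R H T)"
    unfolding rep_closure_def using wf0 by auto
qed

end



lemma cong_F: assumes c: "rep_cong R (T1, T2)" shows "theta_cong (Frep R) (T1 \<times> T2)"
proof -
  have L: "lie_ideal (rlie R) T1" and S: "subspace (rmod R) T2"
    and a1: "\<And>l t. l \<in> vcarrier (rlie R) \<Longrightarrow> t \<in> T2 \<Longrightarrow> ract R l t \<in> T2"
    and a2: "\<And>t v. t \<in> T1 \<Longrightarrow> v \<in> vcarrier (rmod R) \<Longrightarrow> ract R t v \<in> T2"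
    using c unfolding rep_cong_def by auto
  have sub2: "vsub (rmod R) a b \<in> T2" if "a \<in> T2" "b \<in> T2" for a b
    using S that unfolding subspace_def vsub_def by blast
  have T1s: "T1 \<subseteq> vcarrier (rlie R)" "vzero (rlie R) \<in> T1" "\<And>x y. x \<in> T1 \<Longrightarrow> y \<in> T1 \<Longrightarrow> vadd (rlie R) x y \<in> T1"
    "\<And>a x. x \<in> T1 \<Longrightarrow> vsmul (rlie R) a x \<in> T1"
    "\<And>x t. x \<in> vcarrier (rlie R) \<Longrightarrow> t \<in> T1 \<Longrightarrow> lbr (rlie R) x t \<in> T1 \<and> lbr (rlie R) t x \<in> T1"
    using L unfolding lie_ideal_def subspace_def by auto
  have T2s: "T2 \<subseteq> vcarrier (rmod R)" "vzero (rmod R) \<in> T2" "\<And>x y. x \<in> T2 \<Longrightarrow> y \<in> T2 \<Longrightarrow> vadd (rmod R) x y \<in> T2"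
    "\<And>a x. x \<in> T2 \<Longrightarrow> vsmul (rmod R) a x \<in> T2"
    using S unfolding subspace_def by auto
  show ?thesis
    unfolding theta_cong_def lie_ideal_def subspace_def
  proof (intro conjI ballI allI)
    show "T1 \<times> T2 \<subseteq> vcarrier (Frep R)" using T1s T2s by auto
    show "vzero (Frep R) \<in> T1 \<times> T2" using T1s T2s by auto
  next
    fix x y assume "x \<in> T1 \<times> T2" "y \<in> T1 \<times> T2"
    thus "vadd (Frep R) x y \<in> T1 \<times> T2" using T1s T2s by auto
  next
    fix a x assume "x \<in> T1 \<times> T2"
    thus "vsmul (Frep R) a x \<in> T1 \<times> T2" using T1s T2s by auto
  next
    fix x t assume x: "x \<in> vcarrier (Frep R)" and t: "t \<in> T1 \<times> T2"
    obtain x1 x2 where xe: "x = (x1, x2)" by fastforce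
    obtain t1 t2 where te: "t = (t1, t2)" by fastforce
    have x12: "x1 \<in> vcarrier (rlie R)" "x2 \<in> vcarrier (rmod R)" using x xe by auto
    have t12: "t1 \<in> T1" "t2 \<in> T2" using t te by auto
    show "lbr (Frep R) x t \<in> T1 \<times> T2"
      using xe te x12 t12 T1s(5) a1 a2 sub2 by simp
    show "lbr (Frep R) t x \<in> T1 \<times> T2"
      using xe te x12 t12 T1s(5) a1 a2 sub2 by simp
  next
    fix t assume "t \<in> T1 \<times> T2"
    thus "tproj (Frep R) t \<in> T1 \<times> T2" using T1s by auto
  qed
qed

context fixes R :: "('k::field, 'l, 'v) rep" and H :: "('k, 'l2, 'v2) rep"
  assumes wR: "wfR R" and rH: "rep_alg H"
begin

lemma fs_times: "B \<noteq> {} \<Longrightarrow> fst ` (A \<times> B) = A" "A \<noteq> {} \<Longrightarrow> snd ` (A \<times> B) = B" by auto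

lemma part1: assumes "rep_cong R (T1, T2)" "rep_closure R H (T1, T2) = (T1, T2)"
  shows "theta_closure (Frep R) (Frep H) (T1 \<times> T2) = T1 \<times> T2"
proof -
  have "T1 \<noteq> {}" "T2 \<noteq> {}" using assms(1) unfolding rep_cong_def lie_ideal_def subspace_def by auto
  thus ?thesis using KL1[OF wR rH, of "T1 \<times> T2"] assms(2) fs_times by simp
qed

lemma bij_F1: "bij_betw (\<lambda>(T1, T2). T1 \<times> T2) (Cl_rep R H) (Cl_theta (Frep R) (Frep H))"
  unfolding bij_betw_def
proof (intro conjI)
  have ne: "fst T \<noteq> {}" "snd T \<noteq> {}" if "T \<in> Cl_rep R H" for T
    using rc_zero[OF wR rH, of T] that unfolding Cl_rep_def by auto
  show "inj_on (\<lambda>(T1, T2). T1 \<times> T2) (Cl_rep R H)"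
  proof (rule inj_onI)
    fix P Q assume P: "P \<in> Cl_rep R H" and Q: "Q \<in> Cl_rep R H" and e: "(\<lambda>(T1, T2). T1 \<times> T2) P = (\<lambda>(T1, T2). T1 \<times> T2) Q"
    obtain P1 P2 Q1 Q2 where pe: "P = (P1, P2)" "Q = (Q1, Q2)" by fastforce
    have "P1 \<times> P2 = Q1 \<times> Q2" using e pe by simp
    moreover have "P1 \<noteq> {}" "P2 \<noteq> {}" "Q1 \<noteq> {}" "Q2 \<noteq> {}" using ne P Q pe by fastforce+
    ultimately show "P = Q" using pe by (simp add: times_eq_iff)
  qed
  show "(\<lambda>(T1, T2). T1 \<times> T2) ` Cl_rep R H = Cl_theta (Frep R) (Frep H)"
  proof
    show "(\<lambda>(T1, T2). T1 \<times> T2) ` Cl_rep R H \<subseteq> Cl_theta (Frep R) (Frep H)"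
    proof (rule image_subsetI)
      fix P assume P: "P \<in> Cl_rep R H"
      obtain P1 P2 where pe: "P = (P1, P2)" by fastforce
      have "P1 \<noteq> {}" "P2 \<noteq> {}" using ne P pe by fastforce+
      moreover have "rep_closure R H (P1, P2) = (P1, P2)" using P pe unfolding Cl_rep_def by simp
      ultimately have "theta_closure (Frep R) (Frep H) (P1 \<times> P2) = P1 \<times> P2"
        using KL1[OF wR rH, of "P1 \<times> P2"] fs_times by simp
      thus "(\<lambda>(T1, T2). T1 \<times> T2) P \<in> Cl_theta (Frep R) (Frep H)" using pe unfolding Cl_theta_def by simp
    qed
  next
    show "Cl_theta (Frep R) (Frep H) \<subseteq> (\<lambda>(T1, T2). T1 \<times> T2) ` Cl_rep R H"
    proof
      fix S assume "S \<in> Cl_theta (Frep R) (Frep H)"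
      hence Sc: "theta_closure (Frep R) (Frep H) S = S" unfolding Cl_theta_def by simp
      define P where "P = rep_closure R H (fst ` S, snd ` S)"
      have SP: "S = fst P \<times> snd P" using KL1[OF wR rH, of S] Sc P_def by simp
      have "vzero (rlie R) \<in> fst P" "vzero (rmod R) \<in> snd P" unfolding P_def by (rule rc_zero[OF wR rH])+
      hence "fst P \<noteq> {}" "snd P \<noteq> {}" by auto
      hence "fst ` S = fst P" "snd ` S = snd P" using SP fs_times by auto
      hence "(fst ` S, snd ` S) = P" by (simp add: prod_eq_iff)
      hence "rep_closure R H P = P" unfolding P_def by (rule ssubst) (rule refl)
      hence "P \<in> Cl_rep R H" unfolding Cl_rep_def by simp
      moreover have "S = (\<lambda>(T1, T2). T1 \<times> T2) P" using SP by (cases P) simp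
      ultimately show "S \<in> (\<lambda>(T1, T2). T1 \<times> T2) ` Cl_rep R H" by blast
    qed
  qed
qed

end

theorem proposition7:
  fixes X Y :: "nat set" and H :: "('k::field_char_0, 'l, 'v) rep"
    and M :: "nat set" and Fm :: "('k, 'a) theta" and \<iota> :: "nat \<Rightarrow> 'a"
    and N :: "('k, 'n) theta"
  assumes "finite X" and "finite Y" and "card X = card Y" and "rep_alg H"
    and "finite M" and "theta_free TYPE('a) Fm M \<iota>" and "theta_free TYPE('n) Fm M \<iota>"
    and "theta_alg N"
  shows
    "(\<forall>T1 T2. rep_cong (Wrep X Y :: ('k, _, _) rep) (T1, T2) \<and> rep_closure (Wrep X Y) H (T1, T2) = (T1, T2)
        \<longrightarrow> theta_cong (Frep (Wrep X Y)) (T1 \<times> T2) \<and>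
            theta_closure (Frep (Wrep X Y)) (Frep H) (T1 \<times> T2) = T1 \<times> T2)
     \<and> (\<forall>T. theta_cong Fm T \<and> theta_closure Fm N T = T
        \<longrightarrow> rep_cong (Finv Fm) (T \<inter> pker Fm, T \<inter> pim Fm) \<and>
            rep_closure (Finv Fm) (Finv N) (T \<inter> pker Fm, T \<inter> pim Fm) = (T \<inter> pker Fm, T \<inter> pim Fm))
     \<and> bij_betw (\<lambda>(T1, T2). T1 \<times> T2) (Cl_rep (Wrep X Y :: ('k, _, _) rep) H)
         (Cl_theta (Frep (Wrep X Y)) (Frep H))
     \<and> bij_betw (\<lambda>T. (T \<inter> pker Fm, T \<inter> pim Fm)) (Cl_theta Fm N) (Cl_rep (Finv Fm) (Finv N))"
proof -
  have tF: "tsp Fm" using assms(6) unfolding theta_free_def tsp_def by blast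
  have tN: "tsp N" using assms(8) unfolding tsp_def .
  have w: "wfR (Wrep X Y :: ('k, _, _) rep)" by (rule wfR_W)
  show ?thesis
  proof (intro conjI allI impI)
    fix T1 T2 assume a: "rep_cong (Wrep X Y :: ('k, _, _) rep) (T1, T2) \<and> rep_closure (Wrep X Y) H (T1, T2) = (T1, T2)"
    show "theta_cong (Frep (Wrep X Y)) (T1 \<times> T2)" using cong_F a by blast
    show "theta_closure (Frep (Wrep X Y)) (Frep H) (T1 \<times> T2) = T1 \<times> T2"
      using part1[OF w assms(4)] a by blast
  next
    fix T assume a: "theta_cong Fm T \<and> theta_closure Fm N T = T"
    show "rep_cong (Finv Fm) (T \<inter> pker Fm, T \<inter> pim Fm)" using cong_rep[OF tF tN] a by blast
    show "rep_closure (Finv Fm) (Finv N) (T \<inter> pker Fm, T \<inter> pim Fm) = (T \<inter> pker Fm, T \<inter> pim Fm)"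
      using closed_rep[OF tF tN] a by blast
  next
    show "bij_betw (\<lambda>(T1, T2). T1 \<times> T2) (Cl_rep (Wrep X Y :: ('k, _, _) rep) H) (Cl_theta (Frep (Wrep X Y)) (Frep H))"
      by (rule bij_F1[OF w assms(4)])
    show "bij_betw (\<lambda>T. (T \<inter> pker Fm, T \<inter> pim Fm)) (Cl_theta Fm N) (Cl_rep (Finv Fm) (Finv N))"
      by (rule bij_F2[OF tF tN])
  qed
qed



end
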